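(* Let $p$ be a prime, $m$ a positive integer, $q=p^m$ with $q>2$, and $n=q^2+1$. Let $\lambda\in\mathbb{F}_{q^2}^*$ have multiplicative order $r$, where $r\mid(q-1)$ and $\nu_2(r)=\nu_2(q-1)$. Let $\delta\in\mathbb{F}_{q^4}$ be a primitive $rn$-th root of unity with $\delta^n=\lambda$, let $g_1(x)=(x-\delta)(x-\delta^{q^2})$, $g_{q^2-q+1}(x)=(x-\delta^{q^2-q+1})(x-\delta^{q^4-q^3+q^2})$, and let $\mathcal{C}(1,q^2-q+1)$ be the $\lambda$-constacyclic code of length $n$ over $\mathbb{F}_{q^2}$ with check polynomial $g_1(x)g_{q^2-q+1}(x)$. Then the subfield subcode $\mathcal{C}(1,q^2-q+1)|_{\mathbb{F}_q}=\mathcal{C}(1,q^2-q+1)\cap\mathbb{F}_q^n$ has parameters $[q^2+1,4,q^2-q]$ and weight enumerator \[ 1+(q^2-q)(q^2+1)z^{q^2-q}+(q-1)(q^2+1)z^{q^2}, \] and its dual code (over $\mathbb{F}_q$) has parameters $[q^2+1,q^2-3,4]$.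
   Context: $\nu_2$ is the $2$-adic valuation. A $\lambda$-constacyclic code of length $n$ over $\mathbb{F}_{q^2}$ is an ideal of $\mathbb{F}_{q^2}[x]/\langle x^n-\lambda\rangle$; its check polynomial is $(x^n-\lambda)/g(x)$ where $g$ is the monic generator polynomial. The weight enumerator is $\sum_iA_iz^i$ with $A_i$ the number of codewords of Hamming weight $i$. *)

theory Defs
  imports "HOL-Computational_Algebra.Computational_Algebra"
begin

text \<open>All fields are realised inside one ambient finite field of type 'a
(playing the role of F_{q^4}); the subfield F_{q^k} is the fixed set of x |-> x^(q^k).\<close>

definition Fsub :: "nat \<Rightarrow> 'a::field set" where
  "Fsub k = {x. x ^ k = x}"

definition mult_ord :: "'a::field \<Rightarrow> nat" where
  "mult_ord x = (if \<exists>k>0. x ^ k = 1 then (LEAST k. 0 < k \<and> x ^ k = 1) else 0)"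

text \<open>Vectors of length n are functions nat => 'a vanishing at indices >= n.\<close>
definition vec_poly :: "nat \<Rightarrow> (nat \<Rightarrow> 'a::comm_monoid_add) \<Rightarrow> 'a poly" where
  "vec_poly n c = (\<Sum>i<n. monom (c i) i)"

definition hamming_wt :: "nat \<Rightarrow> (nat \<Rightarrow> 'a::zero) \<Rightarrow> nat" where
  "hamming_wt n c = card {i\<in>{..<n}. c i \<noteq> 0}"

definition min_dist :: "nat \<Rightarrow> (nat \<Rightarrow> 'a::zero) set \<Rightarrow> nat" where
  "min_dist n C = Min (hamming_wt n ` (C - {(\<lambda>_. 0)}))"

definition weight_enum :: "nat \<Rightarrow> (nat \<Rightarrow> 'a::zero) set \<Rightarrow> nat poly" where
  "weight_enum n C = (\<Sum>i\<le>n. monom (card {c\<in>C. hamming_wt n c = i}) i)"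

definition constacyclic_code_chk ::
  "'a::field set \<Rightarrow> nat \<Rightarrow> 'a \<Rightarrow> 'a poly \<Rightarrow> (nat \<Rightarrow> 'a) set" where
  "constacyclic_code_chk K n lam h =
     (let g = (monom 1 n - [:lam:]) div h in
      {c. (\<forall>i<n. c i \<in> K) \<and> (\<forall>i\<ge>n. c i = 0) \<and>
          (\<exists>a. (\<forall>j. coeff a j \<in> K) \<and> vec_poly n c = (a * g) mod (monom 1 n - [:lam:]))})"

definition subfield_subcode :: "nat \<Rightarrow> (nat \<Rightarrow> 'a) set \<Rightarrow> 'a set \<Rightarrow> (nat \<Rightarrow> 'a) set" where
  "subfield_subcode n C K = {c\<in>C. \<forall>i<n. c i \<in> K}"

definition dual_code :: "'a::field set \<Rightarrow> nat \<Rightarrow> (nat \<Rightarrow> 'a) set \<Rightarrow> (nat \<Rightarrow> 'a) set" where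
  "dual_code K n C = {y. (\<forall>i<n. y i \<in> K) \<and> (\<forall>i\<ge>n. y i = 0) \<and>
                        (\<forall>c\<in>C. (\<Sum>i<n. c i * y i) = 0)}"

end

theory Submission
  imports Defs
begin

locale cc =
  fixes p m q n r :: nat and lam \<delta> :: "'a::{field,finite}"
  assumes prime_p: "prime p" and m_pos: "m > 0" and q_def: "q = p ^ m" and q_gt: "q > 2"
    and n_def: "n = q^2 + 1"
    and card_F: "card (UNIV :: 'a set) = q ^ 4"
    and lam_nz: "lam \<noteq> 0"
    and r_dvd: "r dvd (q - 1)" and mult2: "multiplicity 2 r = multiplicity 2 (q - 1)"
    and ord_delta: "mult_ord \<delta> = r * n" and delta_n: "\<delta> ^ n = lam"
begin

lemma of_nat_card_zero: "of_nat (card (UNIV :: 'a set)) = (0::'a)"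
proof -
  have "(\<Sum>x\<in>(UNIV::'a set). x) = (\<Sum>x\<in>UNIV. x + 1)"
    by (rule sum.reindex_bij_witness[of _ "\<lambda>y. y + 1" "\<lambda>y. y - 1"]) auto
  also have "\<dots> = (\<Sum>x\<in>UNIV. x) + of_nat (card (UNIV :: 'a set))"
    by (simp add: sum.distrib)
  finally show ?thesis by simp
qed

lemma CHAR_eq: "CHAR('a) = p"
proof -
  have pr: "prime CHAR('a)"
    using prime_CHAR_semidom finite_imp_CHAR_pos[OF finite_UNIV] by auto
  have cp: "card (UNIV::'a set) = p^(m*4)" by (simp add: card_F q_def power_mult)
  have "CHAR('a) dvd p ^ (m*4)"
    using of_nat_card_zero unfolding cp by (metis of_nat_eq_0_iff_char_dvd)
  hence "CHAR('a) dvd p" using prime_dvd_power[OF pr] by blast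
  thus ?thesis using pr prime_p by (metis primes_dvd_imp_eq)
qed

lemma prime_CHAR: "prime CHAR('a)" using CHAR_eq prime_p by simp

lemma qk_CHAR: "q ^ k = CHAR('a) ^ (m*k)"
  by (simp add: CHAR_eq q_def power_mult)

lemma frob_add: "(x + y :: 'a) ^ (q ^ k) = x ^ (q ^ k) + y ^ (q ^ k)"
  by (rule freshmans_dream'[OF prime_CHAR qk_CHAR])

lemma frob_sum: "(sum (f::'b \<Rightarrow> 'a) A) ^ (q ^ k) = (\<Sum>i\<in>A. f i ^ (q ^ k))"
  by (rule freshmans_dream_sum'[OF prime_CHAR qk_CHAR])

lemma frob_diff: "(x - y :: 'a) ^ (q ^ k) = x ^ (q ^ k) - y ^ (q ^ k)"
proof -
  have "x ^ (q ^ k) = ((x - y) + y) ^ (q ^ k)" by simp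
  also have "\<dots> = (x - y) ^ (q ^ k) + y ^ (q ^ k)" by (rule frob_add)
  finally show ?thesis by simp
qed

lemma frob_neg: "(- x :: 'a) ^ (q ^ k) = - (x ^ (q ^ k))"
  using frob_diff[of 0 x k] q_gt by (simp add: power_0_left)

lemma frob_add1: "(x + y :: 'a) ^ q = x ^ q + y ^ q"
  using frob_add[of x y 1] by simp
lemma frob_diff1: "(x - y :: 'a) ^ q = x ^ q - y ^ q"
  using frob_diff[of x y 1] by simp
lemma frob_neg1: "(- x :: 'a) ^ q = - (x ^ q)"
  using frob_neg[of x 1] by simp
lemma frob_sum1: "(sum (f::'b \<Rightarrow> 'a) A) ^ q = (\<Sum>i\<in>A. f i ^ q)"
  using frob_sum[of f A 1] by simp

lemma pow_card: "(x::'a) ^ card (UNIV :: 'a set) = x"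
proof (cases "x = 0")
  case False
  have "x * (\<Prod>y\<in>UNIV-{0}. x * y) = x * x ^ (card (UNIV :: 'a set) - 1) * \<Prod>(UNIV-{0})"
    by (simp add: prod.distrib mult_ac)
  also have "x * x ^ (card (UNIV :: 'a set) - 1) = x ^ Suc (card (UNIV :: 'a set) - 1)"
    by (subst power_Suc) auto
  also have "Suc (card (UNIV :: 'a set) - 1) = card (UNIV :: 'a set)"
    using finite_UNIV_card_ge_0[where ?'a = 'a] by simp
  also have "(\<Prod>y\<in>UNIV-{0}. x * y) = (\<Prod>y\<in>UNIV-{0}. y)"
    by (rule prod.reindex_bij_witness[of _ "\<lambda>y. y / x" "\<lambda>y. x * y"]) (use False in auto)
  finally show ?thesis
    by simp
qed (use finite_UNIV_card_ge_0[where ?'a = 'a] in auto)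

lemma pow_q4: "(x::'a) ^ (q ^ 4) = x"
  using pow_card card_F by simp

lemma q_ge3: "q \<ge> 3" using q_gt by simp

end

context cc begin

abbreviation Fq :: "'a set" where "Fq \<equiv> Fsub q"

lemma Fq_iff: "x \<in> Fq \<longleftrightarrow> x ^ q = x" by (simp add: Fsub_def)

lemma Fq_0[simp]: "0 \<in> Fq" using q_gt by (simp add: Fq_iff)
lemma Fq_1[simp]: "1 \<in> Fq" by (simp add: Fq_iff)
lemma Fq_add: "x \<in> Fq \<Longrightarrow> y \<in> Fq \<Longrightarrow> x + y \<in> Fq" by (simp add: Fq_iff frob_add1)
lemma Fq_diff: "x \<in> Fq \<Longrightarrow> y \<in> Fq \<Longrightarrow> x - y \<in> Fq" by (simp add: Fq_iff frob_diff1)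
lemma Fq_uminus: "x \<in> Fq \<Longrightarrow> - x \<in> Fq" by (simp add: Fq_iff frob_neg1)
lemma Fq_mult: "x \<in> Fq \<Longrightarrow> y \<in> Fq \<Longrightarrow> x * y \<in> Fq" by (simp add: Fq_iff power_mult_distrib)
lemma Fq_inverse: "x \<in> Fq \<Longrightarrow> inverse x \<in> Fq" by (simp add: Fq_iff power_inverse)
lemma Fq_divide: "x \<in> Fq \<Longrightarrow> y \<in> Fq \<Longrightarrow> x / y \<in> Fq" by (simp add: Fq_iff power_divide)
lemma Fq_power: "x \<in> Fq \<Longrightarrow> x ^ k \<in> Fq" unfolding Fq_iff by (metis power_mult mult.commute)
lemma Fq_sum: "(\<And>i. i \<in> A \<Longrightarrow> f i \<in> Fq) \<Longrightarrow> sum f A \<in> Fq"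
  by (induction A rule: infinite_finite_induct) (auto intro: Fq_add)
lemma Fq_of_nat: "of_nat k \<in> Fq"
  by (induction k) (auto intro: Fq_add)
lemma Fq_powq: "x \<in> Fq \<Longrightarrow> x ^ (q ^ k) = x"
proof (induction k)
  case (Suc k) thus ?case by (simp add: power_mult Fq_iff)
qed simp
lemma Fq_sub_q2: "x \<in> Fq \<Longrightarrow> x \<in> Fsub (q^2)"
  using Fq_powq[of x 2] by (simp add: Fsub_def)

lemma nz_pow: "(x::'a) \<noteq> 0 \<Longrightarrow> x ^ (q ^ 4 - 1) = 1"
proof -
  assume x: "x \<noteq> 0"
  have "q ^ 4 > 0" using q_gt by simp
  hence "x * x ^ (q ^ 4 - 1) = x ^ (q^4)" by (simp add: power_Suc[symmetric])
  also have "\<dots> = x * 1" using pow_q4 by simp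
  finally show ?thesis using x by simp
qed

lemma roots_bound:
  fixes P :: "'a poly"
  assumes "P \<noteq> 0" shows "card {x. poly P x = 0} \<le> degree P"
  using card_poly_roots_bound[OF assms] .

lemma card_Fq_le: "card Fq \<le> q"
proof -
  define P :: "'a poly" where "P = monom 1 q - monom 1 1"
  have c: "coeff P q = 1" using q_gt by (simp add: P_def coeff_monom)
  hence P0: "P \<noteq> 0" by auto
  have "degree P \<le> q" unfolding P_def using q_gt
    by (intro degree_diff_le) (auto simp: degree_monom_le intro: order.trans[OF degree_monom_le])
  moreover have "Fq = {x. poly P x = 0}" by (auto simp: P_def poly_monom Fq_iff)
  ultimately show ?thesis using roots_bound[OF P0] by simp
qed

lemma q4_eq: "q ^ 4 - 1 = (q - 1) * (q^3 + q^2 + q + 1)"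
proof -
  obtain k where k: "q = k + 1" using q_gt by (metis add.commute less_imp_Suc_add plus_1_eq_Suc)
  show ?thesis unfolding k by (simp add: eval_nat_numeral algebra_simps)
qed

lemma card_Fq_ge: "card Fq \<ge> q"
proof -
  define s where "s = q^3 + q^2 + q + 1"
  define G :: "'a poly" where "G = (\<Sum>i<s. monom 1 ((q - 1) * i))"
  have s0: "s > 0" by (simp add: s_def)
  have "coeff G 0 = (\<Sum>i<s. if i = 0 then 1 else 0)"
    unfolding G_def coeff_sum using q_gt by (intro sum.cong) (auto simp: coeff_monom)
  also have "\<dots> = 1" using s0 by (simp add: sum.delta)
  finally have G0: "G \<noteq> 0" by auto
  have dG: "degree G \<le> (q - 1) * (s - 1)" unfolding G_def
    by (intro degree_sum_le) (auto intro!: order.trans[OF degree_monom_le])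
  have qs: "(q - 1) * s = q^4 - 1" using q4_eq by (simp add: s_def)
  have sub: "UNIV \<subseteq> Fq \<union> {x. poly G x = 0}"
  proof
    fix x :: 'a
    show "x \<in> Fq \<union> {x. poly G x = 0}"
    proof (cases "x \<in> Fq")
      case False
      hence x0: "x \<noteq> 0" by auto
      define u where "u = x ^ (q - 1)"
      have "u \<noteq> 1"
      proof
        assume "u = 1"
        hence "x ^ (q - 1) * x = x" by (simp add: u_def)
        moreover have "x ^ q = x ^ (q - 1) * x" using q_gt by (cases q) (simp_all add: mult.commute)
        ultimately have "x ^ q = x" by simp
        thus False using False by (simp add: Fq_iff)
      qed
      moreover have "u ^ s = 1" using nz_pow[OF x0] qs by (simp add: u_def flip: power_mult)
      ultimately have "(\<Sum>i<s. u ^ i) = 0" by (simp add: geometric_sum)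
      moreover have "poly G x = (\<Sum>i<s. u ^ i)"
        by (simp add: G_def poly_sum poly_monom u_def power_mult)
      ultimately show ?thesis by simp
    qed simp
  qed
  have "q ^ 4 = card (UNIV :: 'a set)" using card_F by simp
  also have "\<dots> \<le> card (Fq \<union> {x. poly G x = 0})" by (rule card_mono[OF _ sub]) simp
  also have "\<dots> \<le> card Fq + card {x. poly G x = 0}" by (rule card_Un_le)
  also have "\<dots> \<le> card Fq + (q - 1) * (s - 1)" using roots_bound[OF G0] dG by simp
  finally have "q ^ 4 \<le> card Fq + (q - 1) * (s - 1)" .
  moreover have "(q - 1) * (s - 1) + q = q ^ 4"
  proof -
    obtain k where k: "q = k + 1" using q_gt by (metis add.commute less_imp_Suc_add plus_1_eq_Suc)
    show ?thesis unfolding s_def k by (simp add: eval_nat_numeral algebra_simps)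
  qed
  ultimately show ?thesis by linarith
qed

lemma card_Fq: "card Fq = q" using card_Fq_le card_Fq_ge by simp

lemma finite_Fq[simp]: "finite (A :: 'a set)" by simp

end

context cc begin

lemma n_gt: "n > q^2" using n_def by simp
lemma n_pos: "n > 0" using n_def by simp
lemma n_ge4: "n \<ge> 4"
proof -
  have "q^2 \<ge> 3^2" using q_gt by (intro power_mono) auto
  thus ?thesis using n_def by simp
qed

lemma powq_split: "(x::'a) ^ q = x ^ (q - 1) * x"
  using q_gt by (cases q) (simp_all add: mult.commute)

lemma delta_nz: "\<delta> \<noteq> 0"
  using delta_n lam_nz n_pos by (metis power_0_left less_not_refl2)

lemma ord_props: "r * n > 0 \<and> \<delta> ^ (r * n) = 1 \<and> (\<forall>k. 0 < k \<and> \<delta> ^ k = 1 \<longrightarrow> r * n \<le> k)"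
proof -
  have ex: "\<exists>k>0. \<delta> ^ k = 1"
  proof -
    have "q^4 > 1" using q_gt by (intro one_less_power) auto
    thus ?thesis using nz_pow[OF delta_nz] by (intro exI[of _ "q^4 - 1"]) auto
  qed
  have eq: "r * n = (LEAST k. 0 < k \<and> \<delta> ^ k = 1)"
    using ord_delta ex by (simp add: mult_ord_def)
  have L: "0 < r * n \<and> \<delta> ^ (r * n) = 1" unfolding eq by (rule LeastI_ex[OF ex])
  have "\<forall>k. 0 < k \<and> \<delta> ^ k = 1 \<longrightarrow> r * n \<le> k" unfolding eq by (blast intro: Least_le)
  with L show ?thesis by blast
qed

lemma rn_pos: "r * n > 0" using ord_props by simp
lemma r_pos: "r > 0" using rn_pos by simp
lemma delta_rn: "\<delta> ^ (r * n) = 1" using ord_props by simp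

lemma delta_pow_one: "\<delta> ^ k = 1 \<longleftrightarrow> r * n dvd k"
proof
  assume k: "\<delta> ^ k = 1"
  have "\<delta> ^ k = \<delta> ^ (r * n * (k div (r * n))) * \<delta> ^ (k mod (r * n))"
    by (simp only: power_add[symmetric] mult_div_mod_eq)
  also have "\<delta> ^ (r * n * (k div (r * n))) = 1" by (simp only: power_mult[of \<delta> "r * n"] delta_rn power_one)
  finally have m1: "\<delta> ^ (k mod (r * n)) = 1" using k by simp
  show "r * n dvd k"
  proof (rule ccontr)
    assume "\<not> r * n dvd k"
    hence "k mod (r * n) > 0" by (simp add: dvd_eq_mod_eq_0)
    hence "r * n \<le> k mod (r * n)" using ord_props m1 by blast
    moreover have "k mod (r * n) < r * n" using rn_pos by simp
    ultimately show False by simp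
  qed
next
  assume "r * n dvd k"
  then obtain j where k: "k = r * n * j" by auto
  have "\<delta> ^ k = (\<delta> ^ (r * n)) ^ j" unfolding k by (rule power_mult)
  thus "\<delta> ^ k = 1" by (simp only: delta_rn power_one)
qed

lemma delta_pow_eq: "a \<le> b \<Longrightarrow> \<delta> ^ a = \<delta> ^ b \<longleftrightarrow> r * n dvd (b - a)"
proof -
  assume ab: "a \<le> b"
  have "\<delta> ^ b = \<delta> ^ a * \<delta> ^ (b - a)" using ab by (simp flip: power_add)
  thus ?thesis using delta_nz by (auto simp: delta_pow_one[symmetric])
qed

lemma delta_pow_add_mult: "\<delta> ^ (a + r * n * k) = \<delta> ^ a"
proof -
  have "\<delta> ^ (r * n * k) = 1" using delta_pow_one by simp
  thus ?thesis by (simp add: power_add)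
qed

definition \<theta> :: 'a where "\<theta> = inverse \<delta>"

lemma theta_nz: "\<theta> \<noteq> 0" using delta_nz by (simp add: \<theta>_def)

lemma theta_pow_one: "\<theta> ^ k = 1 \<longleftrightarrow> r * n dvd k"
  by (simp add: \<theta>_def power_inverse delta_pow_one)

lemma lam_r: "lam ^ r = 1"
  using delta_rn delta_n by (metis mult.commute power_mult)

lemma s_ex: "\<exists>s. q - 1 = r * s \<and> odd s"
proof -
  obtain s where s: "q - 1 = r * s" using r_dvd by auto
  have s0: "s \<noteq> 0"
  proof
    assume "s = 0" with s have "q - 1 = 0" by simp
    with q_gt show False by simp
  qed
  have "multiplicity (2::nat) (r * s) = multiplicity 2 r + multiplicity 2 s"
    using r_pos s0 by (intro prime_elem_multiplicity_mult_distrib) auto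
  hence "multiplicity (2::nat) s = 0" using mult2 s by simp
  hence "\<not> (2::nat) dvd s" using s0 by (simp add: multiplicity_eq_zero_iff)
  thus ?thesis using s by auto
qed

definition s :: nat where "s = (SOME s. q - 1 = r * s \<and> odd s)"
lemma s_props: "q - 1 = r * s" "odd s"
  using someI_ex[OF s_ex] unfolding s_def[symmetric] by auto

lemma lam_Fq: "lam \<in> Fq"
proof -
  have "lam ^ (q - 1) = 1" using s_props lam_r by (simp add: power_mult)
  hence "lam ^ (q - 1) * lam = lam" by simp
  moreover have "lam ^ q = lam ^ (q - 1) * lam" using q_gt by (cases q) (simp_all add: mult.commute)
  ultimately show ?thesis by (simp add: Fq_iff)
qed

lemma n_s_coprime: "coprime n s"
proof -
  obtain k where k: "q = k + 1" using q_gt by (metis add.commute less_imp_Suc_add plus_1_eq_Suc)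
  have n1: "n = (q - 1) * (q + 1) + 2" using n_def unfolding k by (simp add: algebra_simps power2_eq_square)
  have n2: "n = s * (r * (q + 1)) + 2" using n1[unfolded s_props(1)] by (simp add: algebra_simps)
  have s0: "s > 0" using s_props by (intro odd_pos) auto
  have "gcd n s dvd s * (r * (q + 1))" by simp
  moreover have "gcd n s dvd s * (r * (q + 1)) + 2" using n2 by (metis gcd_dvd1)
  ultimately have "gcd n s dvd 2" using dvd_add_right_iff by blast
  hence le: "gcd n s \<le> 2" by (rule dvd_imp_le) simp
  have pos: "gcd n s > 0" using s0 by simp
  have "odd (gcd n s)" using s_props by (meson dvd_trans gcd_dvd2)
  hence "gcd n s = 1" using le pos by presburger
  thus ?thesis using coprime_iff_gcd_eq_1 by blast
qed

lemma theta_pow_Fq: "k < n \<Longrightarrow> \<theta> ^ k \<in> Fq \<Longrightarrow> k = 0"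
proof -
  assume kn: "k < n" and F: "\<theta> ^ k \<in> Fq"
  have nz: "\<theta> ^ k \<noteq> 0" using theta_nz by simp
  have "(\<theta> ^ k) ^ (q - 1) * \<theta> ^ k = \<theta> ^ k"
    using F powq_split[of "\<theta> ^ k"] by (simp add: Fq_iff)
  hence "(\<theta> ^ k) ^ (q - 1) = 1" using nz by (metis mult_cancel_right2)
  hence d: "r * n dvd k * (q - 1)" by (simp add: theta_pow_one flip: power_mult)
  have kq: "k * (q - 1) = r * (k * s)" using s_props(1) by simp
  have "r * n dvd r * (k * s)" using d unfolding kq .
  hence "n dvd k * s" using r_pos nat_mult_dvd_cancel1 by blast
  hence nk: "n dvd k" using coprime_dvd_mult_left_iff[OF n_s_coprime] by blast
  show "k = 0"
  proof (rule ccontr)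
    assume "k \<noteq> 0"
    hence "n \<le> k" using nk dvd_imp_le[of n k] by simp
    thus False using kn by simp
  qed
qed

lemma theta_ratio: "i < n \<Longrightarrow> j < n \<Longrightarrow> \<theta> ^ j / \<theta> ^ i \<in> Fq \<Longrightarrow> i = j"
proof -
  assume i: "i < n" and j: "j < n" and F: "\<theta> ^ j / \<theta> ^ i \<in> Fq"
  show "i = j"
  proof (cases "i \<le> j")
    case True
    have e: "\<theta> ^ (j - i) = \<theta> ^ j / \<theta> ^ i" by (rule power_diff[OF theta_nz True])
    have "j - i < n" using j by linarith
    moreover have "\<theta> ^ (j - i) \<in> Fq" unfolding e by (rule F)
    ultimately have "j - i = 0" by (rule theta_pow_Fq)
    thus ?thesis using True by linarith
  next
    case False
    hence le: "j \<le> i" by linarith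
    have e: "\<theta> ^ (i - j) = \<theta> ^ i / \<theta> ^ j" by (rule power_diff[OF theta_nz le])
    have "inverse (\<theta> ^ j / \<theta> ^ i) \<in> Fq" using F by (rule Fq_inverse)
    hence "\<theta> ^ (i - j) \<in> Fq" unfolding e inverse_divide .
    moreover have "i - j < n" using i by linarith
    ultimately have "i - j = 0" using theta_pow_Fq by blast
    thus ?thesis using False by linarith
  qed
qed

end

context cc begin

lemma powpow: "((x::'a) ^ (q ^ a)) ^ (q ^ b) = x ^ (q ^ (a + b))"
  by (simp only: power_mult[symmetric] power_add)

lemma pow_q4': "((x::'a) ^ (q ^ a)) ^ (q ^ (4 - a)) = x" if "a \<le> 4"
  using powpow[of x a "4 - a"] that pow_q4 by simp

lemma pow_q4_mult: "(x::'a) ^ (q ^ 4 * k) = x ^ k"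
  by (simp only: power_mult pow_q4)

lemma frob_simps:
  "((x::'a) ^ q) ^ q = x ^ (q^2)"
  "((x::'a) ^ q) ^ (q^2) = x ^ (q^3)"
  "((x::'a) ^ q) ^ (q^3) = x"
  "((x::'a) ^ (q^2)) ^ q = x ^ (q^3)"
  "((x::'a) ^ (q^2)) ^ (q^2) = x"
  "((x::'a) ^ (q^2)) ^ (q^3) = x ^ q"
  "((x::'a) ^ (q^3)) ^ q = x"
  "((x::'a) ^ (q^3)) ^ (q^2) = x ^ q"
  "((x::'a) ^ (q^3)) ^ (q^3) = x ^ (q^2)"
proof -
  have e: "q * q = q^2" "q * q^2 = q^3" "q * q^3 = q^4" "q^2 * q = q^3" "q^2 * q^2 = q^4"
    "q^2 * q^3 = q^4 * q" "q^3 * q = q^4" "q^3 * q^2 = q^4 * q" "q^3 * q^3 = q^4 * q^2"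
    by (simp_all add: power2_eq_square power3_eq_cube power4_eq_xxxx mult.assoc)
  show "((x::'a) ^ q) ^ q = x ^ (q^2)" by (simp only: power_mult[symmetric] e)
  show "((x::'a) ^ q) ^ (q^2) = x ^ (q^3)" by (simp only: power_mult[symmetric] e)
  show "((x::'a) ^ q) ^ (q^3) = x" by (simp only: power_mult[symmetric] e pow_q4)
  show "((x::'a) ^ (q^2)) ^ q = x ^ (q^3)" by (simp only: power_mult[symmetric] e)
  show "((x::'a) ^ (q^2)) ^ (q^2) = x" by (simp only: power_mult[symmetric] e pow_q4)
  show "((x::'a) ^ (q^2)) ^ (q^3) = x ^ q" by (simp only: power_mult[symmetric] e pow_q4_mult)
  show "((x::'a) ^ (q^3)) ^ q = x" by (simp only: power_mult[symmetric] e pow_q4)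
  show "((x::'a) ^ (q^3)) ^ (q^2) = x ^ q" by (simp only: power_mult[symmetric] e pow_q4_mult)
  show "((x::'a) ^ (q^3)) ^ (q^3) = x ^ (q^2)" by (simp only: power_mult[symmetric] e pow_q4_mult)
qed

lemma conj_inj:
  assumes deg: "\<And>d. 0 < d \<Longrightarrow> d < 4 \<Longrightarrow> (x::'a) ^ (q ^ d) \<noteq> x"
    and e: "e < 4" and f: "f < 4" and eq: "x ^ (q ^ e) = x ^ (q ^ f)"
  shows "e = f"
proof (rule ccontr)
  assume ne: "e \<noteq> f"
  have *: "\<And>e f. e < f \<Longrightarrow> f < 4 \<Longrightarrow> x ^ (q ^ e) = x ^ (q ^ f) \<Longrightarrow> False"
  proof -
    fix e f :: nat assume ef: "e < f" "f < 4" and eq: "x ^ (q ^ e) = x ^ (q ^ f)"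
    have "x ^ (q ^ (e + (4 - f))) = (x ^ (q ^ e)) ^ (q ^ (4 - f))" by (rule powpow[symmetric])
    also have "\<dots> = (x ^ (q ^ f)) ^ (q ^ (4 - f))" by (simp only: eq)
    also have "\<dots> = x" using ef by (intro pow_q4') simp
    finally have "x ^ (q ^ (e + (4 - f))) = x" .
    moreover have "0 < e + (4 - f)" "e + (4 - f) < 4" using ef by auto
    ultimately show False using deg[of "e + (4 - f)"] by simp
  qed
  show False
  proof (cases "e < f")
    case True thus False using *[of e f] f eq by blast
  next
    case False hence "f < e" using ne by simp
    thus False using *[of f e] e eq[symmetric] by blast
  qed
qed

lemma delta_deg4: "0 < d \<Longrightarrow> d < 4 \<Longrightarrow> \<delta> ^ (q ^ d) \<noteq> \<delta>"
proof
  assume d: "0 < d" "d < 4" and eq: "\<delta> ^ (q ^ d) = \<delta>"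
  have q1: "q ^ d \<ge> 1" using q_gt by simp
  have "\<delta> ^ 1 = \<delta> ^ (q ^ d)" using eq by simp
  hence "r * n dvd q ^ d - 1" using delta_pow_eq[OF q1] by simp
  hence nd: "n dvd q ^ d - 1" using dvd_mult_right by blast
  have qq: "q \<le> q^2" "q < q^2" using q_gt by (simp_all add: power2_eq_square)
  consider "d = 1" | "d = 2" | "d = 3" using d by linarith
  thus False
  proof cases
    case 1
    hence "n dvd q - 1" using nd by simp
    moreover have "q - 1 > 0" "q - 1 < n" using q_gt n_def qq by linarith+
    ultimately show False using dvd_imp_le[of n "q - 1"] by linarith
  next
    case 2
    hence "n dvd q^2 - 1" using nd by simp
    moreover have "q^2 - 1 > 0" "q^2 - 1 < n" using q_gt n_def qq by linarith+
    ultimately show False using dvd_imp_le[of n "q^2 - 1"] by linarith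
  next
    case 3
    hence n3: "n dvd q^3 - 1" using nd by simp
    have "n dvd q * n" by simp
    moreover have q3: "q^3 \<ge> 1" using q_gt by simp
    moreover have "q * n = q^3 + q" by (simp add: n_def algebra_simps power2_eq_square power3_eq_cube)
    ultimately have "q * n = (q ^ 3 - 1) + (q + 1)" by linarith
    hence "n dvd (q ^ 3 - 1) + (q + 1)" by (metis dvd_triv_right)
    hence "n dvd q + 1" using n3 dvd_add_right_iff by blast
    moreover have "q + 1 < n" using n_def qq by linarith
    ultimately show False using dvd_imp_le[of n "q + 1"] by linarith
  qed
qed

lemma theta_pow_q: "\<theta> ^ (q ^ d) = inverse (\<delta> ^ (q ^ d))"
  by (simp add: \<theta>_def power_inverse)

lemma theta_deg4: "0 < d \<Longrightarrow> d < 4 \<Longrightarrow> \<theta> ^ (q ^ d) \<noteq> \<theta>"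
  using delta_deg4[of d] by (simp add: \<theta>_def power_inverse)

definition Tr :: "'a \<Rightarrow> 'a" where "Tr x = x + x ^ q + x ^ (q^2) + x ^ (q^3)"

lemma Tr_Fq: "Tr x \<in> Fq"
  unfolding Fq_iff Tr_def by (simp add: frob_add1 frob_simps pow_q4 algebra_simps)

lemma Tr_add: "Tr (x + y) = Tr x + Tr y"
  unfolding Tr_def by (simp add: frob_add1 frob_add algebra_simps)

lemma Tr_diff: "Tr (x - y) = Tr x - Tr y"
  unfolding Tr_def by (simp add: frob_diff1 frob_diff algebra_simps)

lemma Tr_scal: "t \<in> Fq \<Longrightarrow> Tr (t * x) = t * Tr x"
  unfolding Tr_def using Fq_powq[of t 2] Fq_powq[of t 3]
  by (simp add: power_mult_distrib Fq_iff algebra_simps)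

lemma Tr_0[simp]: "Tr 0 = 0" using Tr_diff[of 0 0] by simp

lemma Tr_sum: "Tr (sum f A) = (\<Sum>i\<in>A. Tr (f i))"
  by (induction A rule: infinite_finite_induct) (simp_all add: Tr_add)

lemma Tr_nonzero: "\<exists>x. Tr x \<noteq> 0"
proof (rule ccontr)
  assume "\<not> (\<exists>x. Tr x \<noteq> 0)"
  hence all: "\<And>x. Tr x = 0" by simp
  define P :: "'a poly" where "P = monom 1 1 + monom 1 q + monom 1 (q^2) + monom 1 (q^3)"
  have l1: "1 < q^3" using q_gt by (intro one_less_power) auto
  have "q^1 < q^3" "q^2 < q^3" using q_gt by (simp_all only: power_strict_increasing_iff)
  hence lt: "1 < q^3" "q < q^3" "q^2 < q^3" using l1 by simp_all
  have "coeff P (q^3) = 1" using lt by (simp add: P_def coeff_monom)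
  hence P0: "P \<noteq> 0" by auto
  have "degree P \<le> q^3" unfolding P_def using lt
    by (intro degree_add_le degree_monom_le[THEN order.trans]; simp)+
  moreover have "{x. poly P x = 0} = UNIV" using all by (auto simp: P_def poly_monom Tr_def)
  ultimately have "q ^ 4 \<le> q ^ 3" using roots_bound[OF P0] card_F by simp
  moreover have "q ^ 3 < q ^ 4" using q_gt by (intro power_strict_increasing) auto
  ultimately show False by simp
qed

lemma Tr_nondeg: "(\<And>b. Tr (b * z) = 0) \<Longrightarrow> z = 0"
proof (rule ccontr)
  assume all: "\<And>b. Tr (b * z) = 0" and z: "z \<noteq> 0"
  obtain x where x: "Tr x \<noteq> 0" using Tr_nonzero by blast
  have "Tr ((x / z) * z) = 0" by (rule all)
  thus False using x z by simp
qed

lemma Tr_one: "\<exists>x0. Tr x0 = 1"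
proof -
  obtain x where x: "Tr x \<noteq> 0" using Tr_nonzero by blast
  have "Tr (inverse (Tr x) * x) = inverse (Tr x) * Tr x"
    by (rule Tr_scal) (rule Fq_inverse[OF Tr_Fq])
  thus ?thesis using x by auto
qed

end

context cc begin

lemma split_count:
  fixes H :: "'a set" and L :: "'a \<Rightarrow> 'a" and z :: 'a
  assumes z: "L z = 1" and LF: "\<And>x. x \<in> H \<Longrightarrow> L x \<in> Fq"
    and Hd: "\<And>x t. x \<in> H \<Longrightarrow> t \<in> Fq \<Longrightarrow> x - t * z \<in> H"
    and Ha: "\<And>x t. x \<in> H \<Longrightarrow> t \<in> Fq \<Longrightarrow> x + t * z \<in> H"
    and La: "\<And>x t. t \<in> Fq \<Longrightarrow> L (x + t * z) = L x + t"
    and Ld: "\<And>x t. t \<in> Fq \<Longrightarrow> L (x - t * z) = L x - t"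
  shows "card H = q * card {x\<in>H. L x = 0}"
proof -
  let ?H0 = "{x\<in>H. L x = 0}"
  have "bij_betw (\<lambda>x. (L x, x - L x * z)) H (Fq \<times> ?H0)"
  proof (rule bij_betwI[where g = "\<lambda>(t, k). k + t * z"])
    show "(\<lambda>x. (L x, x - L x * z)) \<in> H \<rightarrow> Fq \<times> ?H0"
      using LF Hd Ld by auto
    show "(\<lambda>(t, k). k + t * z) \<in> Fq \<times> ?H0 \<rightarrow> H"
      using Ha by auto
    show "\<And>x. x \<in> H \<Longrightarrow> (case (L x, x - L x * z) of (t, k) \<Rightarrow> k + t * z) = x"
      by simp
    show "\<And>y. y \<in> Fq \<times> ?H0 \<Longrightarrow> (L (case y of (t, k) \<Rightarrow> k + t * z),
        (case y of (t, k) \<Rightarrow> k + t * z) - L (case y of (t, k) \<Rightarrow> k + t * z) * z) = y"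
      using La by auto
  qed
  hence "card H = card (Fq \<times> ?H0)" by (rule bij_betw_same_card)
  also have "\<dots> = q * card ?H0" by (simp add: card_cartesian_product card_Fq)
  finally show ?thesis .
qed

lemma card_kerTr: "card {x. Tr x = 0} = q ^ 3"
proof -
  obtain x0 where x0: "Tr x0 = 1" using Tr_one by blast
  have "card (UNIV::'a set) = q * card {x\<in>UNIV. Tr x = 0}"
    by (rule split_count[where L = Tr and z = x0])
       (simp_all add: x0 Tr_Fq Tr_add Tr_diff Tr_scal)
  hence "q ^ 4 = q * card {x. Tr x = 0}" using card_F by simp
  moreover have "q ^ 4 = q * q ^ 3" by (simp add: power_Suc[symmetric] del: power_Suc)
  ultimately show ?thesis using q_gt by simp
qed

lemma card_ker_w: "w \<noteq> 0 \<Longrightarrow> card {a. Tr (a * w) = 0} = q ^ 3"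
proof -
  assume w: "w \<noteq> 0"
  have eq: "{a. Tr (a * w) = 0} = (\<lambda>x. x / w) ` {x. Tr x = 0}"
  proof (intro set_eqI iffI)
    fix a assume "a \<in> {a. Tr (a * w) = 0}"
    hence "a * w \<in> {x. Tr x = 0}" "a = (a * w) / w" using w by auto
    thus "a \<in> (\<lambda>x. x / w) ` {x. Tr x = 0}" by blast
  next
    fix a assume "a \<in> (\<lambda>x. x / w) ` {x. Tr x = 0}"
    then obtain x where "Tr x = 0" "a = x / w" by blast
    thus "a \<in> {a. Tr (a * w) = 0}" using w by simp
  qed
  have "inj_on (\<lambda>x. x / w) {x. Tr x = 0}" using w by (auto intro: inj_onI)
  thus ?thesis unfolding eq by (simp add: card_image card_kerTr)
qed

lemma card_ker2:
  assumes w: "w \<noteq> 0" and w': "w' / w \<notin> Fq"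
  shows "card {a. Tr (a * w) = 0 \<and> Tr (a * w') = 0} = q ^ 2"
proof -
  let ?H = "{a. Tr (a * w) = 0}"
  have ex: "\<exists>a0\<in>?H. Tr (a0 * w') = 1"
  proof (rule ccontr)
    assume "\<not> ?thesis"
    hence no1: "\<And>a. a \<in> ?H \<Longrightarrow> Tr (a * w') \<noteq> 1" by blast
    have all0: "\<And>a. a \<in> ?H \<Longrightarrow> Tr (a * w') = 0"
    proof (rule ccontr)
      fix a assume aH: "a \<in> ?H" and ne: "Tr (a * w') \<noteq> 0"
      let ?s = "Tr (a * w')"
      have sF: "inverse ?s \<in> Fq" by (rule Fq_inverse[OF Tr_Fq])
      have "Tr ((inverse ?s * a) * w) = inverse ?s * Tr (a * w)"
        using Tr_scal[OF sF, of "a * w"] by (simp add: mult.assoc)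
      hence "inverse ?s * a \<in> ?H" using aH by simp
      moreover have "Tr ((inverse ?s * a) * w') = inverse ?s * ?s"
        using Tr_scal[OF sF, of "a * w'"] by (simp add: mult.assoc)
      hence "Tr ((inverse ?s * a) * w') = 1" using ne by simp
      ultimately show False using no1 by blast
    qed
    obtain x0 where x0: "Tr x0 = 1" using Tr_one by blast
    define u where "u = w' / w"
    define c where "c = Tr (x0 * u)"
    have cF: "c \<in> Fq" unfolding c_def by (rule Tr_Fq)
    have "\<And>b. Tr (b * (u - c)) = 0"
    proof -
      fix b
      let ?a = "(b - Tr b * x0) / w"
      have "Tr (?a * w) = Tr (b - Tr b * x0)" using w by simp
      also have "\<dots> = Tr b - Tr b * Tr x0" by (simp add: Tr_diff Tr_scal[OF Tr_Fq])
      also have "\<dots> = 0" using x0 by simp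
      finally have "?a \<in> ?H" by simp
      hence "Tr (?a * w') = 0" by (rule all0)
      moreover have "?a * w' = (b - Tr b * x0) * u" using w by (simp add: u_def)
      ultimately have "Tr ((b - Tr b * x0) * u) = 0" by simp
      moreover have e1: "(b - Tr b * x0) * u = b * u - Tr b * (x0 * u)" by (simp add: algebra_simps)
      moreover have "Tr (b * u - Tr b * (x0 * u)) = Tr (b * u) - Tr b * c"
        unfolding Tr_diff Tr_scal[OF Tr_Fq] c_def ..
      ultimately have z: "Tr (b * u) - Tr b * c = 0" by simp
      have e2: "b * (u - c) = b * u - c * b" by (simp add: algebra_simps)
      have "Tr (b * u - c * b) = Tr (b * u) - c * Tr b"
        unfolding Tr_diff Tr_scal[OF cF] ..
      hence "Tr (b * (u - c)) = Tr (b * u) - c * Tr b" unfolding e2 .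
      with z show "Tr (b * (u - c)) = 0" by (simp add: mult.commute)
    qed
    hence "u - c = 0" by (rule Tr_nondeg)
    hence "u \<in> Fq" using cF by simp
    thus False using w' by (simp add: u_def)
  qed
  then obtain a0 where a0H: "a0 \<in> ?H" and a01: "Tr (a0 * w') = 1" by blast
  have "card ?H = q * card {x\<in>?H. Tr (x * w') = 0}"
  proof (rule split_count[where L = "\<lambda>a. Tr (a * w')" and z = a0])
    show "Tr (a0 * w') = 1" by (rule a01)
    show "\<And>x. x \<in> ?H \<Longrightarrow> Tr (x * w') \<in> Fq" by (rule Tr_Fq)
    show "\<And>x t. x \<in> ?H \<Longrightarrow> t \<in> Fq \<Longrightarrow> x - t * a0 \<in> ?H"
      using a0H by (simp add: algebra_simps Tr_diff Tr_scal mult.assoc)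
    show "\<And>x t. x \<in> ?H \<Longrightarrow> t \<in> Fq \<Longrightarrow> x + t * a0 \<in> ?H"
      using a0H by (simp add: algebra_simps Tr_add Tr_scal mult.assoc)
    show "\<And>x t. t \<in> Fq \<Longrightarrow> Tr ((x + t * a0) * w') = Tr (x * w') + t"
      using a01 by (simp add: algebra_simps Tr_add Tr_scal mult.assoc)
    show "\<And>x t. t \<in> Fq \<Longrightarrow> Tr ((x - t * a0) * w') = Tr (x * w') - t"
      using a01 by (simp add: algebra_simps Tr_diff Tr_scal mult.assoc)
  qed
  hence "q ^ 3 = q * card {a. Tr (a * w) = 0 \<and> Tr (a * w') = 0}"
    using card_ker_w[OF w] by simp
  moreover have "q ^ 3 = q * q ^ 2" by (simp add: power_Suc[symmetric] del: power_Suc)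
  ultimately show ?thesis using q_gt by simp
qed

end

lemma poly_vec: "poly (vec_poly n (c :: nat \<Rightarrow> 'b::comm_ring_1)) x = (\<Sum>i<n. c i * x ^ i)"
  by (simp add: vec_poly_def poly_sum poly_monom)

lemma coeff_vec: "coeff (vec_poly n (c :: nat \<Rightarrow> 'b::comm_ring_1)) i = (if i < n then c i else 0)"
  by (simp add: vec_poly_def coeff_sum coeff_monom)

lemma degree_vec: "n > 0 \<Longrightarrow> degree (vec_poly n (c :: nat \<Rightarrow> 'b::comm_ring_1)) < n"
proof -
  assume n: "n > 0"
  have "degree (vec_poly n c) \<le> n - 1" unfolding vec_poly_def
    by (intro degree_sum_le) (auto intro: order.trans[OF degree_monom_le])
  thus ?thesis using n by simp
qed

lemma vec_diff: "vec_poly n (\<lambda>i. (c :: nat \<Rightarrow> 'b::comm_ring_1) i - d i) = vec_poly n c - vec_poly n d"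
  by (simp add: vec_poly_def sum_subtractf[symmetric] diff_monom)

lemma prod_roots_dvd:
  fixes P :: "'b::field poly"
  assumes "finite A" "\<And>a. a \<in> A \<Longrightarrow> poly P a = 0"
  shows "(\<Prod>a\<in>A. [:-a, 1:]) dvd P"
  using assms
proof (induction A arbitrary: P rule: finite_induct)
  case empty thus ?case by simp
next
  case (insert a A P)
  have "poly P a = 0" using insert.prems by simp
  hence "[:-a, 1:] dvd P" by (simp add: poly_eq_0_iff_dvd)
  then obtain P' where P: "P = [:-a, 1:] * P'" by (elim dvdE)
  have "\<And>b. b \<in> A \<Longrightarrow> poly P' b = 0"
  proof -
    fix b assume b: "b \<in> A"
    hence "b \<noteq> a" using insert.hyps by auto
    moreover have "poly P b = 0" using insert.prems b by simp
    ultimately show "poly P' b = 0" unfolding P by simp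
  qed
  hence "(\<Prod>a\<in>A. [:-a, 1:]) dvd P'" by (rule insert.IH)
  hence "[:-a, 1:] * (\<Prod>a\<in>A. [:-a, 1:]) dvd [:-a, 1:] * P'" by (rule mult_dvd_mono[OF dvd_refl])
  thus ?case using insert.hyps P by simp
qed

lemma degree_prod_lin: "finite A \<Longrightarrow> degree (\<Prod>a\<in>A. [:-a, 1::'b::field:]) = card A"
  by (simp add: degree_prod_eq_sum_degree)

lemma lead_prod_lin: "lead_coeff (\<Prod>a\<in>A. [:-a, 1::'b::field:]) = 1"
  by (simp add: lead_coeff_prod)

lemma monic_dvd_eq:
  fixes P Q :: "'b::field poly"
  assumes d: "P dvd Q" and Q0: "Q \<noteq> 0" and deg: "degree P = degree Q"
    and lP: "lead_coeff P = 1" and lQ: "lead_coeff Q = 1"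
  shows "P = Q"
proof -
  obtain K where K: "Q = P * K" using d by (elim dvdE)
  have P0: "P \<noteq> 0" "K \<noteq> 0" using Q0 K by auto
  hence "degree Q = degree P + degree K" unfolding K by (rule degree_mult_eq)
  hence "degree K = 0" using deg by simp
  then obtain c where c: "K = [:c:]" by (metis degree_eq_zeroE)
  have "lead_coeff Q = lead_coeff P * lead_coeff K" unfolding K by (rule lead_coeff_mult)
  hence "c = 1" using lP lQ c by simp
  thus ?thesis using K c by simp
qed

context cc begin

definition fpol :: "'a poly" where "fpol = monom 1 n - [:lam:]"
definition Bset :: "'a set" where "Bset = (\<lambda>e. \<delta> ^ (q ^ e)) ` {..<4}"
definition Rset :: "'a set" where "Rset = (\<lambda>j. \<delta> ^ (1 + r * j)) ` {..<n}"
definition hpol :: "'a poly" where "hpol = (\<Prod>b\<in>Bset. [:-b, 1:])"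
definition gpol :: "'a poly" where "gpol = fpol div hpol"

lemma poly_fpol: "poly fpol x = x ^ n - lam"
  by (simp add: fpol_def poly_monom)

lemma coeff_fpol: "coeff fpol i = (if i = n then 1 else 0) - (if i = 0 then lam else 0)"
  by (simp add: fpol_def coeff_monom coeff_pCons split: nat.split)

lemma degree_fpol: "degree fpol = n" and lead_fpol: "lead_coeff fpol = 1"
proof -
  have "degree fpol \<le> n" unfolding fpol_def
    by (intro degree_diff_le degree_monom_le) (auto)
  moreover have "coeff fpol n = 1" using n_pos by (simp add: coeff_fpol)
  ultimately show dg: "degree fpol = n" by (metis le_degree le_antisym one_neq_zero)
  show "lead_coeff fpol = 1" using \<open>coeff fpol n = 1\<close> dg by simp
qed

lemma fpol_nz: "fpol \<noteq> 0" using lead_fpol by auto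

lemma inj_B: "inj_on (\<lambda>e. \<delta> ^ (q ^ e)) {..<4}"
proof (intro inj_onI)
  fix e f assume "e \<in> {..<4::nat}" "f \<in> {..<4::nat}" "\<delta> ^ (q ^ e) = \<delta> ^ (q ^ f)"
  thus "e = f" using conj_inj[of \<delta> e f] delta_deg4 by simp
qed

lemma card_B: "card Bset = 4"
  unfolding Bset_def using card_image[OF inj_B] by simp

lemma inj_R: "inj_on (\<lambda>j. \<delta> ^ (1 + r * j)) {..<n}"
proof (intro inj_onI)
  fix i j assume i: "i \<in> {..<n}" and j: "j \<in> {..<n}" and eq: "\<delta> ^ (1 + r * i) = \<delta> ^ (1 + r * j)"
  have *: "\<And>i j. i < n \<Longrightarrow> j < n \<Longrightarrow> i \<le> j \<Longrightarrow> \<delta> ^ (1 + r * i) = \<delta> ^ (1 + r * j) \<Longrightarrow> i = j"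
  proof -
    fix i j assume ij: "i < n" "j < n" "i \<le> j" and e: "\<delta> ^ (1 + r * i) = \<delta> ^ (1 + r * j)"
    have le: "1 + r * i \<le> 1 + r * j" using ij by simp
    have "r * n dvd (1 + r * j) - (1 + r * i)" using delta_pow_eq[OF le] e by simp
    moreover have "(1 + r * j) - (1 + r * i) = r * (j - i)" by (simp add: diff_mult_distrib2)
    ultimately have "r * n dvd r * (j - i)" by simp
    hence "n dvd j - i" using r_pos nat_mult_dvd_cancel1 by blast
    moreover have "j - i < n" using ij by simp
    ultimately have "j - i = 0" by (metis dvd_imp_le neq0_conv not_le)
    thus "i = j" using ij by simp
  qed
  show "i = j"
  proof (cases "i \<le> j")
    case True thus ?thesis using *[of i j] i j eq by simp
  next
    case False thus ?thesis using *[of j i] i j eq[symmetric] by simp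
  qed
qed

lemma card_R: "card Rset = n"
  unfolding Rset_def using card_image[OF inj_R] by simp

lemma R_root: "z \<in> Rset \<Longrightarrow> z ^ n = lam"
proof -
  assume "z \<in> Rset"
  then obtain j where z: "z = \<delta> ^ (1 + r * j)" by (auto simp: Rset_def)
  have "z ^ n = \<delta> ^ n * \<delta> ^ (r * n * j)" unfolding z
    by (simp only: power_mult[symmetric] power_add[symmetric]) (simp add: algebra_simps)
  also have "\<delta> ^ (r * n * j) = 1" by (simp only: power_mult[of \<delta> "r * n"] delta_rn power_one)
  finally show ?thesis using delta_n by simp
qed

lemma delta_qe_n: "(\<delta> ^ (q ^ e)) ^ n = lam"
proof -
  have "(\<delta> ^ (q ^ e)) ^ n = (\<delta> ^ n) ^ (q ^ e)" by (simp only: power_mult[symmetric] mult.commute)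
  thus ?thesis using delta_n Fq_powq[OF lam_Fq] by simp
qed

lemma fpol_eq: "fpol = (\<Prod>z\<in>Rset. [:-z, 1:])"
proof -
  have "(\<Prod>z\<in>Rset. [:-z, 1:]) dvd fpol"
    by (rule prod_roots_dvd) (simp_all add: poly_fpol R_root)
  moreover have "degree (\<Prod>z\<in>Rset. [:-z, 1:]) = degree fpol"
    by (simp add: degree_prod_lin card_R degree_fpol)
  ultimately show ?thesis using monic_dvd_eq fpol_nz lead_prod_lin lead_fpol by metis
qed

lemma hpol_dvd: "hpol dvd fpol"
  unfolding hpol_def
  by (rule prod_roots_dvd) (auto simp: poly_fpol Bset_def delta_qe_n)

lemma f_eq_gh: "fpol = gpol * hpol"
  using hpol_dvd by (simp add: gpol_def)

lemma hpol_nz: "hpol \<noteq> 0" using f_eq_gh fpol_nz by auto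
lemma gpol_nz: "gpol \<noteq> 0" using f_eq_gh fpol_nz by auto

lemma poly_hpol_nz: "z \<notin> Bset \<Longrightarrow> poly hpol z \<noteq> 0"
  by (auto simp: hpol_def poly_prod)

lemma poly_hpol_B: "z \<in> Bset \<Longrightarrow> poly hpol z = 0"
  by (auto simp: hpol_def poly_prod intro: prod_zero)

lemma poly_gpol: "z \<in> Rset \<Longrightarrow> z \<notin> Bset \<Longrightarrow> poly gpol z = 0"
proof -
  assume z: "z \<in> Rset" "z \<notin> Bset"
  have "poly fpol z = 0" using R_root[OF z(1)] by (simp add: poly_fpol)
  hence "poly gpol z * poly hpol z = 0" by (simp add: f_eq_gh)
  thus ?thesis using poly_hpol_nz[OF z(2)] by simp
qed

lemma C_mem:
  "c \<in> constacyclic_code_chk K n lam hpol \<longleftrightarrow>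
     (\<forall>i<n. c i \<in> K) \<and> (\<forall>i\<ge>n. c i = 0) \<and>
     (\<exists>A. (\<forall>j. coeff A j \<in> K) \<and> vec_poly n c = (A * gpol) mod fpol)"
  by (simp add: constacyclic_code_chk_def Let_def gpol_def fpol_def)

lemma C_vanish:
  assumes c: "c \<in> constacyclic_code_chk K n lam hpol" and z: "z \<in> Rset" "z \<notin> Bset"
  shows "poly (vec_poly n c) z = 0"
proof -
  obtain A where A: "vec_poly n c = (A * gpol) mod fpol" using c by (auto simp: C_mem)
  have "(A * gpol) mod fpol = A * gpol - (A * gpol) div fpol * fpol"
    by (simp add: minus_div_mult_eq_mod)
  hence "poly (vec_poly n c) z = poly A z * poly gpol z - poly ((A * gpol) div fpol) z * poly fpol z"
    unfolding A by simp
  moreover have "poly fpol z = 0" using R_root[OF z(1)] by (simp add: poly_fpol)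
  ultimately show ?thesis using poly_gpol[OF z] by simp
qed

lemma vanish_zero:
  assumes "\<And>z. z \<in> Rset \<Longrightarrow> poly (vec_poly n c) z = 0"
  shows "\<forall>i<n. c i = 0"
proof -
  have "fpol dvd vec_poly n c" unfolding fpol_eq
    by (rule prod_roots_dvd) (simp_all add: Rset_def assms)
  moreover have "degree (vec_poly n c) < degree fpol" using degree_vec[OF n_pos] degree_fpol by simp
  ultimately have "vec_poly n c = 0"
    by (metis dvd_imp_degree_le not_le)
  thus ?thesis using coeff_vec[of n c] by (metis coeff_0)
qed

end

context cc begin

lemma q_nz: "q \<noteq> 0" using q_gt by simp

definition frp :: "'a poly \<Rightarrow> 'a poly" where "frp P = map_poly (\<lambda>x. x ^ q) P"

lemma coeff_frp: "coeff (frp P) i = (coeff P i) ^ q"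
  unfolding frp_def using q_gt by (subst coeff_map_poly) (simp_all add: power_0_left)

lemma frp_mult: "frp (P * Q) = frp P * frp Q"
proof (rule poly_eqI)
  fix k
  have "coeff (frp (P * Q)) k = (\<Sum>i\<le>k. coeff P i * coeff Q (k - i)) ^ q"
    by (simp add: coeff_frp coeff_mult)
  also have "\<dots> = (\<Sum>i\<le>k. (coeff P i) ^ q * (coeff Q (k - i)) ^ q)"
    by (simp add: frob_sum1 power_mult_distrib)
  also have "\<dots> = coeff (frp P * frp Q) k" by (simp add: coeff_mult coeff_frp)
  finally show "coeff (frp (P * Q)) k = coeff (frp P * frp Q) k" .
qed

lemma frp_one: "frp 1 = 1"
  by (rule poly_eqI) (simp add: coeff_frp coeff_1 q_nz power_0_left)

lemma frp_prod: "frp (\<Prod>x\<in>A. F x) = (\<Prod>x\<in>A. frp (F x))"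
  by (induction A rule: infinite_finite_induct) (simp_all add: frp_one frp_mult)

lemma frp_lin: "frp [:- b, 1:] = [:- (b ^ q), 1:]"
  by (rule poly_eqI) (simp add: coeff_frp coeff_pCons frob_neg1 q_nz power_0_left split: nat.split)

lemma frp_fixed: "frp P = P \<longleftrightarrow> (\<forall>i. coeff P i \<in> Fq)"
proof
  assume "frp P = P"
  thus "\<forall>i. coeff P i \<in> Fq" by (metis coeff_frp Fq_iff)
next
  assume "\<forall>i. coeff P i \<in> Fq"
  thus "frp P = P" by (intro poly_eqI) (simp add: coeff_frp Fq_iff)
qed

lemma inj_powq: "inj (\<lambda>x::'a. x ^ q)"
proof (rule injI)
  fix x y :: 'a assume "x ^ q = y ^ q"
  hence "(x ^ q) ^ (q ^ 3) = (y ^ q) ^ (q ^ 3)" by simp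
  thus "x = y" by (simp only: frob_simps)
qed

lemma B_frob: "(\<lambda>b. b ^ q) ` Bset = Bset"
proof (rule card_subset_eq)
  show "finite Bset" by simp
  show "(\<lambda>b. b ^ q) ` Bset \<subseteq> Bset"
  proof
    fix y assume "y \<in> (\<lambda>b. b ^ q) ` Bset"
    then obtain e where e: "e < 4" "y = (\<delta> ^ (q ^ e)) ^ q" by (auto simp: Bset_def)
    hence "y = \<delta> ^ (q ^ (e + 1))" by (simp add: power_mult[symmetric] mult.commute)
    show "y \<in> Bset"
    proof (cases "e = 3")
      case True
      hence "y = \<delta> ^ (q ^ 0)" using \<open>y = \<delta> ^ (q ^ (e + 1))\<close> pow_q4 by simp
      thus ?thesis unfolding Bset_def by (intro image_eqI[where x = 0]) auto
    next
      case False
      hence "e + 1 < 4" using e by simp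
      thus ?thesis using \<open>y = \<delta> ^ (q ^ (e + 1))\<close> unfolding Bset_def by blast
    qed
  qed
  show "card ((\<lambda>b. b ^ q) ` Bset) = card Bset"
    by (rule card_image) (rule inj_on_subset[OF inj_powq], simp)
qed

lemma frp_hpol: "frp hpol = hpol"
proof -
  have "frp hpol = (\<Prod>b\<in>Bset. [:- (b ^ q), 1:])" by (simp add: hpol_def frp_prod frp_lin)
  also have "\<dots> = (\<Prod>b\<in>(\<lambda>b. b ^ q) ` Bset. [:- b, 1:])"
    by (rule prod.reindex[symmetric, unfolded comp_def]) (rule inj_on_subset[OF inj_powq], simp)
  also have "\<dots> = hpol" by (simp only: B_frob hpol_def)
  finally show ?thesis .
qed

lemma frp_fpol: "frp fpol = fpol"
  unfolding frp_fixed coeff_fpol by (intro allI Fq_diff) (simp_all add: lam_Fq)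

lemma frp_gpol: "frp gpol = gpol"
proof -
  have "frp gpol * hpol = frp (gpol * hpol)" by (simp add: frp_mult frp_hpol)
  also have "\<dots> = gpol * hpol" by (simp add: f_eq_gh[symmetric] frp_fpol)
  finally show ?thesis using hpol_nz by simp
qed

lemma frp_quot:
  assumes PA: "P = A * gpol" and P: "frp P = P"
  shows "frp A = A"
proof -
  have "frp A * gpol = frp P" by (simp add: PA frp_mult frp_gpol)
  also have "\<dots> = A * gpol" using P PA by simp
  finally show ?thesis using gpol_nz by simp
qed

end

context cc begin

definition cw :: "'a \<Rightarrow> nat \<Rightarrow> 'a" where
  "cw a = (\<lambda>i. if i < n then Tr (a * \<theta> ^ i) else 0)"

definition Cset where "Cset = constacyclic_code_chk (Fsub (q^2)) n lam hpol"
definition Dset where "Dset = subfield_subcode n Cset Fq"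

lemma pow_swap: "((x::'a) ^ i) ^ k = (x ^ k) ^ i"
  by (simp add: power_mult[symmetric] mult.commute)

definition Sg :: "'a \<Rightarrow> 'a" where "Sg w = (\<Sum>i<n. w ^ i)"

lemma poly_cw: "poly (vec_poly n (cw a)) z =
   a * Sg (\<theta> * z) + a ^ q * Sg (\<theta> ^ q * z) + a ^ (q^2) * Sg (\<theta> ^ (q^2) * z)
   + a ^ (q^3) * Sg (\<theta> ^ (q^3) * z)"
proof -
  have "poly (vec_poly n (cw a)) z = (\<Sum>i<n. Tr (a * \<theta> ^ i) * z ^ i)"
    by (simp add: poly_vec cw_def)
  also have "\<dots> = (\<Sum>i<n. a * (\<theta> * z) ^ i + a ^ q * (\<theta> ^ q * z) ^ i
      + a ^ (q^2) * (\<theta> ^ (q^2) * z) ^ i + a ^ (q^3) * (\<theta> ^ (q^3) * z) ^ i)"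
    by (intro sum.cong refl) (simp add: Tr_def power_mult_distrib pow_swap algebra_simps)
  also have "\<dots> = a * Sg (\<theta> * z) + a ^ q * Sg (\<theta> ^ q * z) + a ^ (q^2) * Sg (\<theta> ^ (q^2) * z)
   + a ^ (q^3) * Sg (\<theta> ^ (q^3) * z)"
    by (simp add: Sg_def sum.distrib sum_distrib_left)
  finally show ?thesis .
qed

lemma Sg_zero: "w ^ n = 1 \<Longrightarrow> w \<noteq> 1 \<Longrightarrow> Sg w = 0"
  by (simp add: Sg_def geometric_sum)

lemma Sg_one: "Sg 1 = of_nat n" by (simp add: Sg_def)

lemma of_nat_q: "of_nat q = (0::'a)"
proof -
  have "p dvd q" using q_def m_pos by simp
  thus ?thesis using CHAR_eq by (simp add: of_nat_eq_0_iff_char_dvd)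
qed

lemma of_nat_n: "of_nat n = (1::'a)"
  using of_nat_q by (simp add: n_def)

lemma theta_n: "\<theta> ^ n = inverse lam"
  by (simp add: \<theta>_def power_inverse delta_n)

lemma w_pow_n: "z ^ n = lam \<Longrightarrow> (\<theta> ^ (q ^ e) * z) ^ n = 1"
proof -
  assume z: "z ^ n = lam"
  have "(\<theta> ^ (q ^ e)) ^ n = (\<theta> ^ n) ^ (q ^ e)" by (rule pow_swap)
  also have "\<dots> = inverse lam" unfolding theta_n by (rule Fq_powq[OF Fq_inverse[OF lam_Fq]])
  finally show ?thesis using z lam_nz by (simp add: power_mult_distrib)
qed

lemma w_one: "\<theta> ^ (q ^ e) * z = 1 \<longleftrightarrow> z = \<delta> ^ (q ^ e)"
proof -
  define d where "d = \<delta> ^ (q ^ e)"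
  have t: "\<theta> ^ (q ^ e) = inverse d" unfolding d_def by (rule theta_pow_q)
  have dnz: "d \<noteq> 0" using delta_nz by (simp add: d_def)
  have "inverse d * z = 1 \<longleftrightarrow> z = d"
  proof
    assume "inverse d * z = 1"
    hence "d * (inverse d * z) = d" by simp
    thus "z = d" using dnz by (simp add: mult.assoc[symmetric])
  next
    assume "z = d" thus "inverse d * z = 1" using dnz by simp
  qed
  thus ?thesis unfolding t d_def .
qed

lemma cw_poly_zero:
  assumes z: "z ^ n = lam" "z \<notin> Bset"
  shows "poly (vec_poly n (cw a)) z = 0"
proof -
  have "\<And>e. e < 4 \<Longrightarrow> Sg (\<theta> ^ (q ^ e) * z) = 0"
  proof -
    fix e :: nat assume e: "e < 4"
    have "z \<noteq> \<delta> ^ (q ^ e)" using z(2) e by (auto simp: Bset_def)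
    thus "Sg (\<theta> ^ (q ^ e) * z) = 0" using w_pow_n[OF z(1)] w_one by (intro Sg_zero) auto
  qed
  from this[of 0] this[of 1] this[of 2] this[of 3] show ?thesis by (simp add: poly_cw)
qed

lemma cw_poly_delta: "poly (vec_poly n (cw a)) \<delta> = a"
proof -
  have "\<And>e. 0 < e \<Longrightarrow> e < 4 \<Longrightarrow> Sg (\<theta> ^ (q ^ e) * \<delta>) = 0"
  proof -
    fix e :: nat assume e: "0 < e" "e < 4"
    have "\<delta> \<noteq> \<delta> ^ (q ^ e)" using delta_deg4[OF e] by simp
    thus "Sg (\<theta> ^ (q ^ e) * \<delta>) = 0" using w_pow_n[OF delta_n] w_one by (intro Sg_zero) auto
  qed
  from this[of 1] this[of 2] this[of 3] have "poly (vec_poly n (cw a)) \<delta> = a * Sg (\<theta> * \<delta>)"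
    by (simp add: poly_cw)
  also have "\<theta> * \<delta> = 1" using delta_nz by (simp add: \<theta>_def)
  finally show ?thesis by (simp add: Sg_one of_nat_n)
qed

lemma cw_inj: "inj cw"
proof (rule injI)
  fix a b assume "cw a = cw b"
  hence "poly (vec_poly n (cw a)) \<delta> = poly (vec_poly n (cw b)) \<delta>" by simp
  thus "a = b" unfolding cw_poly_delta .
qed

lemma cw_Fq: "cw a i \<in> Fq" by (simp add: cw_def Tr_Fq)

lemma cw_in_C: "cw a \<in> Cset"
proof -
  let ?P = "vec_poly n (cw a)"
  have "fpol dvd ?P * hpol" unfolding fpol_eq
  proof (rule prod_roots_dvd)
    fix z assume z: "z \<in> Rset"
    show "poly (?P * hpol) z = 0"
    proof (cases "z \<in> Bset")
      case True thus ?thesis by (simp add: poly_hpol_B)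
    next
      case False thus ?thesis using cw_poly_zero[OF R_root[OF z] False] by simp
    qed
  qed simp
  hence "gpol * hpol dvd ?P * hpol" unfolding f_eq_gh .
  then obtain K where K: "?P * hpol = gpol * hpol * K" by (elim dvdE)
  hence "?P * hpol = (gpol * K) * hpol" by (simp only: ac_simps)
  hence PK: "?P = gpol * K" using hpol_nz mult_right_cancel by blast
  define A where "A = K"
  have PA: "?P = A * gpol" using PK by (simp add: A_def mult.commute)
  have "frp ?P = ?P" unfolding frp_fixed coeff_vec by (simp add: cw_Fq)
  hence "frp A = A" using frp_quot[OF PA] by simp
  hence AF: "\<forall>j. coeff A j \<in> Fq" by (simp add: frp_fixed)
  have "(A * gpol) mod fpol = ?P" unfolding PA[symmetric]
    by (rule mod_poly_less) (simp add: degree_fpol degree_vec n_pos)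
  hence "\<exists>A. (\<forall>j. coeff A j \<in> Fsub (q^2)) \<and> vec_poly n (cw a) = (A * gpol) mod fpol"
    using AF Fq_sub_q2 by metis
  moreover have "\<forall>i<n. cw a i \<in> Fsub (q^2)" using cw_Fq Fq_sub_q2 by blast
  moreover have "\<forall>i\<ge>n. cw a i = 0" by (simp add: cw_def)
  ultimately show ?thesis unfolding Cset_def C_mem by blast
qed

lemma cw_in_D: "cw a \<in> Dset"
  using cw_in_C by (simp add: Dset_def subfield_subcode_def cw_Fq)

lemma frob_eval:
  assumes "\<forall>i<n. d i \<in> Fq"
  shows "poly (vec_poly n d) (x ^ (q ^ e)) = (poly (vec_poly n d) x) ^ (q ^ e)"
proof -
  have "(poly (vec_poly n d) x) ^ (q ^ e) = (\<Sum>i<n. (d i) ^ (q ^ e) * (x ^ i) ^ (q ^ e))"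
    by (simp add: poly_vec frob_sum power_mult_distrib)
  also have "\<dots> = (\<Sum>i<n. d i * (x ^ (q ^ e)) ^ i)"
    using assms by (intro sum.cong refl) (simp add: Fq_powq pow_swap)
  finally show ?thesis by (simp add: poly_vec)
qed

lemma D_sub: "c \<in> Dset \<Longrightarrow> c \<in> range cw"
proof -
  assume c: "c \<in> Dset"
  hence cC: "c \<in> Cset" and cF: "\<forall>i<n. c i \<in> Fq" by (auto simp: Dset_def subfield_subcode_def)
  have c0: "\<forall>i\<ge>n. c i = 0" using cC by (simp add: Cset_def C_mem)
  define a where "a = poly (vec_poly n c) \<delta>"
  define d where "d = (\<lambda>i. c i - cw a i)"
  have dF: "\<forall>i<n. d i \<in> Fq" using cF by (simp add: d_def Fq_diff cw_Fq)
  have vd: "vec_poly n d = vec_poly n c - vec_poly n (cw a)" unfolding d_def by (rule vec_diff)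
  have "\<forall>i<n. d i = 0"
  proof (rule vanish_zero)
    fix z assume z: "z \<in> Rset"
    show "poly (vec_poly n d) z = 0"
    proof (cases "z \<in> Bset")
      case True
      then obtain e where z: "z = \<delta> ^ (q ^ e)" by (auto simp: Bset_def)
      have "poly (vec_poly n d) \<delta> = 0" by (simp add: vd cw_poly_delta a_def)
      thus ?thesis unfolding z frob_eval[OF dF] using q_gt by simp
    next
      case False
      have "poly (vec_poly n c) z = 0" using C_vanish[OF cC[unfolded Cset_def] z False] .
      moreover have "poly (vec_poly n (cw a)) z = 0" using cw_poly_zero[OF R_root[OF z] False] .
      ultimately show ?thesis by (simp add: vd)
    qed
  qed
  hence "c = cw a" using c0 by (auto simp: d_def cw_def fun_eq_iff)
  thus ?thesis by blast
qed

lemma D_eq: "Dset = range cw"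
  using D_sub cw_in_D by blast

lemma card_D: "card Dset = q ^ 4"
  unfolding D_eq using card_image[OF cw_inj] card_F by simp

end

context cc begin

definition Z :: "'a \<Rightarrow> nat" where "Z a = card {i\<in>{..<n}. Tr (a * \<theta> ^ i) = 0}"

lemma Z_sum: "Z a = (\<Sum>i<n. if Tr (a * \<theta> ^ i) = 0 then 1 else 0)"
  unfolding Z_def by (simp add: sum.If_cases Int_def)

lemma moment1: "(\<Sum>a\<in>UNIV. Z a) = n * q ^ 3"
proof -
  have "(\<Sum>a\<in>UNIV. Z a) = (\<Sum>i<n. \<Sum>a\<in>UNIV. if Tr (a * \<theta> ^ i) = 0 then 1 else 0)"
    unfolding Z_sum by (rule sum.swap)
  also have "\<dots> = (\<Sum>i<n. card {a. Tr (a * \<theta> ^ i) = 0})"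
    by (intro sum.cong refl) (simp add: sum.If_cases)
  also have "\<dots> = (\<Sum>i<n. q ^ 3)"
    using theta_nz by (intro sum.cong refl card_ker_w) simp
  finally show ?thesis by simp
qed

lemma moment2: "(\<Sum>a\<in>UNIV. (Z a) ^ 2) = n * q ^ 3 + n * (n - 1) * q ^ 2"
proof -
  have sq: "\<And>a. (Z a) ^ 2 = (\<Sum>i<n. \<Sum>j<n. if Tr (a * \<theta> ^ i) = 0 \<and> Tr (a * \<theta> ^ j) = 0 then 1 else 0)"
    unfolding Z_sum power2_eq_square sum_product by (intro sum.cong refl) auto
  have "(\<Sum>a\<in>UNIV. (Z a) ^ 2) = (\<Sum>i<n. \<Sum>j<n. \<Sum>a\<in>UNIV.
      if Tr (a * \<theta> ^ i) = 0 \<and> Tr (a * \<theta> ^ j) = 0 then 1 else 0)"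
    unfolding sq by (subst sum.swap) (intro sum.cong refl, rule sum.swap)
  also have "\<dots> = (\<Sum>i<n. \<Sum>j<n. card {a. Tr (a * \<theta> ^ i) = 0 \<and> Tr (a * \<theta> ^ j) = 0})"
    by (intro sum.cong refl) (simp add: sum.If_cases)
  also have "\<dots> = (\<Sum>i<n. \<Sum>j<n. if j = i then q ^ 3 else q ^ 2)"
  proof (intro sum.cong refl)
    fix i j assume i: "i \<in> {..<n}" and j: "j \<in> {..<n}"
    show "card {a. Tr (a * \<theta> ^ i) = 0 \<and> Tr (a * \<theta> ^ j) = 0} = (if j = i then q ^ 3 else q ^ 2)"
    proof (cases "j = i")
      case True thus ?thesis using card_ker_w[of "\<theta> ^ i"] theta_nz by simp
    next
      case False
      have "\<theta> ^ j / \<theta> ^ i \<notin> Fq" using theta_ratio[of i j] i j False by auto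
      thus ?thesis using card_ker2[of "\<theta> ^ i" "\<theta> ^ j"] theta_nz False by simp
    qed
  qed
  also have "\<dots> = (\<Sum>i<n. q ^ 3 + (n - 1) * q ^ 2)"
  proof (intro sum.cong refl)
    fix i assume i: "i \<in> {..<n}"
    have "(\<Sum>j<n. if j = i then q ^ 3 else q ^ 2) =
        (if i = i then q ^ 3 else q ^ 2) + (\<Sum>j\<in>{..<n} - {i}. if j = i then q ^ 3 else q ^ 2)"
      using i by (intro sum.remove) auto
    also have "(\<Sum>j\<in>{..<n} - {i}. if j = i then q ^ 3 else q ^ 2) = (\<Sum>j\<in>{..<n} - {i}. q ^ 2)"
      by (intro sum.cong refl) auto
    also have "\<dots> = (n - 1) * q ^ 2" using i by simp
    finally show "(\<Sum>j<n. if j = i then q ^ 3 else q ^ 2) = q ^ 3 + (n - 1) * q ^ 2" by simp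
  qed
  finally show ?thesis by (simp add: algebra_simps)
qed

end

context cc begin

definition Nf :: "'a \<Rightarrow> 'a" where "Nf x = x ^ (q^2) * x"

lemma Nf_mult: "Nf (x * y) = Nf x * Nf y"
  by (simp add: Nf_def power_mult_distrib algebra_simps)

lemma Nf_divide: "Nf (x / y) = Nf x / Nf y"
  by (simp add: Nf_def power_divide)

lemma Nf_theta: "Nf (\<theta> ^ k) \<in> Fq"
proof -
  have "Nf (\<theta> ^ k) = (\<theta> ^ (q^2) * \<theta>) ^ k" by (simp add: Nf_def pow_swap power_mult_distrib)
  also have "\<theta> ^ (q^2) * \<theta> = \<theta> ^ n" by (simp add: n_def power_add)
  also have "\<dots> = inverse lam" by (rule theta_n)
  finally show ?thesis by (simp add: Fq_power Fq_inverse lam_Fq)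
qed

lemma Qlem:
  assumes N: "Nf x \<in> Fq" and t: "x + x ^ (q^2) \<in> Fq"
  shows "x \<in> Fq"
proof -
  have tq: "x ^ q + x ^ (q^3) = x + x ^ (q^2)"
    using t unfolding Fq_iff by (simp add: frob_add1 frob_simps)
  have Nq: "x ^ (q^3) * x ^ q = x ^ (q^2) * x"
    using N unfolding Fq_iff Nf_def by (simp add: power_mult_distrib frob_simps)
  have "(x ^ q - x) * (x ^ q - x ^ (q^2)) = x ^ q * x ^ q - x ^ q * (x + x ^ (q^2)) + x ^ (q^2) * x"
    by (simp add: algebra_simps)
  also have "\<dots> = x ^ q * x ^ q - x ^ q * (x ^ q + x ^ (q^3)) + x ^ (q^3) * x ^ q"
    by (simp only: tq Nq)
  also have "\<dots> = 0" by (simp add: algebra_simps)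
  finally have "x ^ q = x \<or> x ^ q = x ^ (q^2)" by simp
  thus ?thesis
  proof
    assume "x ^ q = x ^ (q^2)"
    hence "(x ^ q) ^ (q^3) = (x ^ (q^2)) ^ (q^3)" by simp
    hence "x = x ^ q" by (simp only: frob_simps)
    thus ?thesis by (simp add: Fq_iff)
  qed (simp add: Fq_iff)
qed

definition \<zeta> :: 'a where "\<zeta> = \<theta> + \<theta> ^ (q^2)"
definition \<epsilon> :: 'a where "\<epsilon> = \<zeta> - \<zeta> ^ q"

lemma zeta_q2: "\<zeta> ^ (q^2) = \<zeta>"
  by (simp add: \<zeta>_def frob_add frob_simps)

lemma zeta_notFq: "\<zeta> \<notin> Fq"
proof
  assume z: "\<zeta> \<in> Fq"
  have N: "Nf \<theta> \<in> Fq" using Nf_theta[of 1] by simp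
  have "\<theta> + \<theta> ^ (q^2) \<in> Fq" using z by (simp only: \<zeta>_def)
  hence "\<theta> \<in> Fq" by (rule Qlem[OF N])
  hence t1: "\<theta> ^ 1 \<in> Fq" by simp
  have "1 < n" using n_ge4 by simp
  hence "(1::nat) = 0" using t1 by (rule theta_pow_Fq)
  thus False by simp
qed

lemma eps_nz: "\<epsilon> \<noteq> 0" using zeta_notFq by (simp add: \<epsilon>_def Fq_iff)

lemma eps_q: "\<epsilon> ^ q = - \<epsilon>"
  unfolding \<epsilon>_def by (simp add: frob_diff1 frob_simps zeta_q2)

lemma eps_q2: "\<epsilon> ^ (q^2) = \<epsilon>"
proof -
  have "\<epsilon> ^ (q^2) = (\<epsilon> ^ q) ^ q" by (simp only: frob_simps)
  also have "\<dots> = \<epsilon>" by (simp add: eps_q frob_neg1)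
  finally show ?thesis .
qed

lemma eps_q3: "\<epsilon> ^ (q^3) = - \<epsilon>"
proof -
  have "\<epsilon> ^ (q^3) = (\<epsilon> ^ (q^2)) ^ q" by (simp only: frob_simps)
  also have "\<dots> = - \<epsilon>" by (simp add: eps_q2 eps_q)
  finally show ?thesis .
qed

lemma Tr_tangent:
  assumes t: "t \<in> Fq"
  shows "Tr (\<epsilon> * t * x ^ (q^2) * y) =
     t * \<epsilon> * ((x ^ (q^2) * y + x * y ^ (q^2)) - (x ^ (q^2) * y + x * y ^ (q^2)) ^ q)"
proof -
  have e: "\<epsilon> * t * x ^ (q^2) * y = t * (\<epsilon> * x ^ (q^2) * y)" by (simp add: algebra_simps)
  have "Tr (\<epsilon> * t * x ^ (q^2) * y) = t * Tr (\<epsilon> * x ^ (q^2) * y)" unfolding e by (rule Tr_scal[OF t])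
  also have "Tr (\<epsilon> * x ^ (q^2) * y) = \<epsilon> * x ^ (q^2) * y + \<epsilon> ^ q * x ^ (q^3) * y ^ q
      + \<epsilon> ^ (q^2) * x * y ^ (q^2) + \<epsilon> ^ (q^3) * x ^ q * y ^ (q^3)"
    by (simp add: Tr_def power_mult_distrib frob_simps)
  also have "\<dots> = \<epsilon> * ((x ^ (q^2) * y + x * y ^ (q^2)) - (x ^ (q^3) * y ^ q + x ^ q * y ^ (q^3)))"
    by (simp add: eps_q eps_q2 eps_q3 algebra_simps)
  also have "x ^ (q^3) * y ^ q + x ^ q * y ^ (q^3) = (x ^ (q^2) * y + x * y ^ (q^2)) ^ q"
    by (simp add: frob_add1 power_mult_distrib frob_simps)
  finally show ?thesis by (simp add: algebra_simps)
qed

lemma tangent_iff: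
  assumes i: "i < n" and j: "j < n"
  shows "(\<theta> ^ i) ^ (q^2) * \<theta> ^ j + \<theta> ^ i * (\<theta> ^ j) ^ (q^2) \<in> Fq \<longleftrightarrow> j = i"
proof
  let ?x = "\<theta> ^ i" and ?y = "\<theta> ^ j"
  assume u: "?x ^ (q^2) * ?y + ?x * ?y ^ (q^2) \<in> Fq"
  define w where "w = ?y / ?x"
  have xnz: "?x \<noteq> 0" using theta_nz by simp
  have Nx: "Nf ?x \<in> Fq" "Nf ?x \<noteq> 0" using Nf_theta xnz by (auto simp: Nf_def)
  have xq: "?x ^ (q^2) \<noteq> 0" using xnz by simp
  have "w + w ^ (q^2) = ?y / ?x + ?y ^ (q^2) / ?x ^ (q^2)" by (simp add: w_def power_divide)
  also have "\<dots> = (?y * ?x ^ (q^2) + ?y ^ (q^2) * ?x) / (?x * ?x ^ (q^2))"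
    by (rule add_frac_eq[OF xnz xq])
  also have "\<dots> = (?x ^ (q^2) * ?y + ?x * ?y ^ (q^2)) / Nf ?x" by (simp add: Nf_def ac_simps)
  finally have "w + w ^ (q^2) = (?x ^ (q^2) * ?y + ?x * ?y ^ (q^2)) / Nf ?x" .
  hence tw: "w + w ^ (q^2) \<in> Fq" using u Nx by (simp add: Fq_divide)
  have "Nf w \<in> Fq" unfolding w_def Nf_divide by (intro Fq_divide Nf_theta)
  hence "w \<in> Fq" using tw by (rule Qlem)
  thus "j = i" using theta_ratio[OF i j] by (simp add: w_def)
next
  assume "j = i"
  hence "(\<theta> ^ i) ^ (q^2) * \<theta> ^ j + \<theta> ^ i * (\<theta> ^ j) ^ (q^2) = 2 * Nf (\<theta> ^ i)"
    by (simp add: Nf_def algebra_simps)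
  thus "(\<theta> ^ i) ^ (q^2) * \<theta> ^ j + \<theta> ^ i * (\<theta> ^ j) ^ (q^2) \<in> Fq"
    using Fq_mult[OF Fq_of_nat[of 2] Nf_theta[of i]] by simp
qed

lemma Z_tangent:
  assumes t: "t \<in> Fq" "t \<noteq> 0" and i: "i < n"
  shows "Z (\<epsilon> * t * (\<theta> ^ i) ^ (q^2)) = 1"
proof -
  have "{j\<in>{..<n}. Tr (\<epsilon> * t * (\<theta> ^ i) ^ (q^2) * \<theta> ^ j) = 0} = {i}"
  proof (intro set_eqI iffI)
    fix j assume "j \<in> {j\<in>{..<n}. Tr (\<epsilon> * t * (\<theta> ^ i) ^ (q^2) * \<theta> ^ j) = 0}"
    hence j: "j < n" and z: "Tr (\<epsilon> * t * (\<theta> ^ i) ^ (q^2) * \<theta> ^ j) = 0" by auto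
    let ?u = "(\<theta> ^ i) ^ (q^2) * \<theta> ^ j + \<theta> ^ i * (\<theta> ^ j) ^ (q^2)"
    have "t * \<epsilon> * (?u - ?u ^ q) = 0" using z Tr_tangent[OF t(1)] by simp
    hence "?u - ?u ^ q = 0" using t eps_nz by simp
    hence "?u \<in> Fq" by (simp add: Fq_iff)
    thus "j \<in> {i}" using tangent_iff[OF i j] by simp
  next
    fix j assume "j \<in> {i}"
    hence ji: "j = i" by simp
    let ?u = "(\<theta> ^ i) ^ (q^2) * \<theta> ^ j + \<theta> ^ i * (\<theta> ^ j) ^ (q^2)"
    have "?u \<in> Fq" unfolding ji using tangent_iff[OF i i] by blast
    hence "?u - ?u ^ q = 0" by (simp add: Fq_iff)
    hence "Tr (\<epsilon> * t * (\<theta> ^ i) ^ (q^2) * \<theta> ^ j) = 0" using Tr_tangent[OF t(1)] by simp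
    thus "j \<in> {j\<in>{..<n}. Tr (\<epsilon> * t * (\<theta> ^ i) ^ (q^2) * \<theta> ^ j) = 0}" using ji i by simp
  qed
  thus ?thesis unfolding Z_def by (simp add: mult.assoc)
qed

end

context cc begin

definition T0 :: "'a set" where
  "T0 = (\<lambda>(t, i). \<epsilon> * t * (\<theta> ^ i) ^ (q^2)) ` ((Fq - {0}) \<times> {..<n})"

definition A1 :: "'a set" where "A1 = UNIV - insert 0 T0"

lemma inj_T0: "inj_on (\<lambda>(t, i). \<epsilon> * t * (\<theta> ^ i) ^ (q^2)) ((Fq - {0}) \<times> {..<n})"
proof (intro inj_onI)
  fix a b assume a: "a \<in> (Fq - {0}) \<times> {..<n}" and b: "b \<in> (Fq - {0}) \<times> {..<n}"
    and eq: "(\<lambda>(t, i). \<epsilon> * t * (\<theta> ^ i) ^ (q^2)) a = (\<lambda>(t, i). \<epsilon> * t * (\<theta> ^ i) ^ (q^2)) b"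
  obtain t i where ti: "a = (t, i)" by (cases a)
  obtain t' i' where ti': "b = (t', i')" by (cases b)
  have t: "t \<in> Fq" "t \<noteq> 0" "i < n" using a ti by auto
  have t': "t' \<in> Fq" "t' \<noteq> 0" "i' < n" using b ti' by auto
  have "\<epsilon> * (t * (\<theta> ^ i) ^ (q^2)) = \<epsilon> * (t' * (\<theta> ^ i') ^ (q^2))"
    using eq ti ti' by (simp add: mult.assoc)
  hence "t * (\<theta> ^ i) ^ (q^2) = t' * (\<theta> ^ i') ^ (q^2)" using eps_nz by simp
  hence "(t * \<theta> ^ i) ^ (q^2) = (t' * \<theta> ^ i') ^ (q^2)"
    using Fq_powq[OF t(1), of 2] Fq_powq[OF t'(1), of 2] by (simp add: power_mult_distrib)
  hence "((t * \<theta> ^ i) ^ (q^2)) ^ (q^2) = ((t' * \<theta> ^ i') ^ (q^2)) ^ (q^2)" by simp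
  hence e: "t * \<theta> ^ i = t' * \<theta> ^ i'" by (simp only: frob_simps)
  have xnz: "\<theta> ^ i \<noteq> 0" using theta_nz by simp
  have "\<theta> ^ i' / \<theta> ^ i = t / t'" using e xnz t'(2) by (simp add: field_simps)
  hence "\<theta> ^ i' / \<theta> ^ i \<in> Fq" using t t' by (simp add: Fq_divide)
  hence ii: "i = i'" using theta_ratio t(3) t'(3) by blast
  hence "t * \<theta> ^ i = t' * \<theta> ^ i" using e by simp
  hence "t = t'" using mult_right_cancel[OF xnz] by blast
  thus "a = b" using ti ti' ii by simp
qed

lemma card_Fq_nz: "card (Fq - {0}) = q - 1"
  using card_Fq by (simp add: card_Diff_singleton)

lemma card_T0: "card T0 = (q - 1) * n"
  unfolding T0_def using card_image[OF inj_T0] by (simp add: card_cartesian_product card_Fq_nz)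

lemma zero_notin_T0: "0 \<notin> T0"
  unfolding T0_def using eps_nz theta_nz by auto

lemma Z_T0: "a \<in> T0 \<Longrightarrow> Z a = 1"
proof -
  assume "a \<in> T0"
  then obtain t i where "t \<in> Fq" "t \<noteq> 0" "i < n" "a = \<epsilon> * t * (\<theta> ^ i) ^ (q^2)"
    unfolding T0_def by auto
  thus ?thesis using Z_tangent by simp
qed

lemma Z_0: "Z 0 = n" by (simp add: Z_def)

lemma sum_split: "(\<Sum>a\<in>UNIV. f a) = f 0 + (\<Sum>a\<in>T0. f a) + (\<Sum>a\<in>A1. (f a :: nat))"
proof -
  have "(\<Sum>a\<in>UNIV. f a) = (\<Sum>a\<in>UNIV - insert 0 T0. f a) + (\<Sum>a\<in>insert 0 T0. f a)"
    by (rule sum.subset_diff) auto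
  also have "(\<Sum>a\<in>insert 0 T0. f a) = f 0 + (\<Sum>a\<in>T0. f a)"
    using zero_notin_T0 by simp
  finally show ?thesis by (simp add: A1_def)
qed

lemma card_A1: "card A1 + 1 + (q - 1) * n = q ^ 4"
proof -
  have "card (UNIV - insert 0 T0) = card (UNIV :: 'a set) - card (insert 0 T0)"
    by (rule card_Diff_subset) auto
  moreover have "card (insert 0 T0) \<le> card (UNIV :: 'a set)" by (rule card_mono) auto
  moreover have "card (insert 0 T0) = 1 + (q - 1) * n" using zero_notin_T0 card_T0 by simp
  ultimately show ?thesis using card_F by (simp add: A1_def)
qed

lemma Z_A1: "a \<in> A1 \<Longrightarrow> Z a = q + 1"
proof -
  assume aA: "a \<in> A1"
  have m1: "n * q ^ 3 = n + (q - 1) * n + (\<Sum>a\<in>A1. Z a)"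
    using moment1 sum_split[of Z] Z_0 Z_T0 card_T0 by simp
  have m2: "n * q ^ 3 + n * (n - 1) * q ^ 2 = n ^ 2 + (q - 1) * n + (\<Sum>a\<in>A1. (Z a) ^ 2)"
    using moment2 sum_split[of "\<lambda>a. (Z a) ^ 2"] Z_0 Z_T0 card_T0 by simp
  define Q where "Q = int q"
  define S1 where "S1 = (\<Sum>a\<in>A1. int (Z a))"
  define S2 where "S2 = (\<Sum>a\<in>A1. (int (Z a)) ^ 2)"
  define c where "c = int (card A1)"
  have nN: "int n = Q ^ 2 + 1" by (simp add: n_def Q_def)
  have q1: "int (q - 1) = Q - 1" using q_gt by (simp add: Q_def of_nat_diff)
  have n1: "int (n - 1) = Q ^ 2" using n_pos by (simp add: n_def Q_def)
  have e1: "int n * Q ^ 3 = int n + (Q - 1) * int n + S1"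
  proof -
    have "int (n * q ^ 3) = int (n + (q - 1) * n + (\<Sum>a\<in>A1. Z a))" using m1 by (rule arg_cong)
    thus ?thesis unfolding of_nat_add of_nat_mult of_nat_power of_nat_sum q1 S1_def Q_def .
  qed
  have e2: "int n * Q ^ 3 + int n * Q ^ 2 * Q ^ 2 = (int n) ^ 2 + (Q - 1) * int n + S2"
  proof -
    have "int (n * q ^ 3 + n * (n - 1) * q ^ 2) = int (n ^ 2 + (q - 1) * n + (\<Sum>a\<in>A1. (Z a) ^ 2))"
      using m2 by (rule arg_cong)
    thus ?thesis unfolding of_nat_add of_nat_mult of_nat_power of_nat_sum q1 n1 S2_def Q_def .
  qed
  have e3: "c + 1 + (Q - 1) * int n = Q ^ 4"
  proof -
    have "int (card A1 + 1 + (q - 1) * n) = int (q ^ 4)" using card_A1 by (rule arg_cong)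
    thus ?thesis unfolding of_nat_add of_nat_mult of_nat_power q1 c_def Q_def by simp
  qed
  have "(\<Sum>a\<in>A1. (int (Z a) - (Q + 1)) ^ 2) = S2 - 2 * (Q + 1) * S1 + (Q + 1) ^ 2 * c"
    by (simp add: S1_def S2_def c_def power2_diff sum_subtractf sum.distrib sum_distrib_left
        algebra_simps)
  also have "\<dots> = 0"
  proof -
    have s1: "S1 = int n * Q ^ 3 - int n - (Q - 1) * int n" using e1 by simp
    have s2: "S2 = int n * Q ^ 3 + int n * Q ^ 2 * Q ^ 2 - (int n) ^ 2 - (Q - 1) * int n" using e2 by simp
    have cc: "c = Q ^ 4 - 1 - (Q - 1) * int n" using e3 by simp
    show ?thesis unfolding s1 s2 cc nN by algebra
  qed
  finally have "(\<Sum>a\<in>A1. (int (Z a) - (Q + 1)) ^ 2) = 0" .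
  hence "\<forall>a\<in>A1. (int (Z a) - (Q + 1)) ^ 2 = 0"
    by (subst (asm) sum_nonneg_eq_0_iff) auto
  hence "(int (Z a) - (Q + 1)) ^ 2 = 0" using aA by blast
  thus "Z a = q + 1" by (simp add: Q_def)
qed

end

context cc begin

lemma wt_cw: "hamming_wt n (cw a) = n - Z a"
proof -
  have "{i\<in>{..<n}. cw a i \<noteq> 0} = {..<n} - {i\<in>{..<n}. Tr (a * \<theta> ^ i) = 0}"
    by (auto simp: cw_def)
  hence "hamming_wt n (cw a) = card ({..<n} - {i\<in>{..<n}. Tr (a * \<theta> ^ i) = 0})"
    by (simp add: hamming_wt_def)
  also have "\<dots> = n - Z a" unfolding Z_def by (subst card_Diff_subset) auto
  finally show ?thesis .
qed

lemma qq_facts: "0 < q^2 - q" "q^2 - q < q^2" "q^2 = n - 1" "q^2 - q = n - (q + 1)"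
proof -
  have "q < q^2" using q_gt by (simp add: power2_eq_square)
  thus "0 < q^2 - q" "q^2 - q < q^2" using q_gt by auto
  show "q^2 = n - 1" by (simp add: n_def)
  show "q^2 - q = n - (q + 1)" by (simp add: n_def)
qed

lemma wt_cases: "hamming_wt n (cw a) = (if a = 0 then 0 else if a \<in> T0 then q^2 else q^2 - q)"
proof -
  have "a \<noteq> 0 \<Longrightarrow> a \<notin> T0 \<Longrightarrow> a \<in> A1" by (simp add: A1_def)
  thus ?thesis using wt_cw Z_0 Z_T0 Z_A1 qq_facts by auto
qed

lemma wt_class: "{a. hamming_wt n (cw a) = k} =
   (if k = 0 then {0} else if k = q^2 then T0 else if k = q^2 - q then A1 else {})"
  using qq_facts zero_notin_T0 unfolding wt_cases A1_def by auto

lemma card_class: "card {c\<in>Dset. hamming_wt n c = k} = card {a. hamming_wt n (cw a) = k}"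
proof -
  have "{c\<in>Dset. hamming_wt n c = k} = cw ` {a. hamming_wt n (cw a) = k}"
    unfolding D_eq by auto
  thus ?thesis by (simp add: card_image inj_on_subset[OF cw_inj])
qed

lemma card_A1': "card A1 = (q^2 - q) * (q^2 + 1)"
proof -
  obtain k where k: "q = k + 1" using q_gt by (metis add.commute less_imp_Suc_add plus_1_eq_Suc)
  have "card A1 + 1 + k * (k * k + 2 * k + 2) = (k + 1) ^ 4"
    using card_A1 unfolding n_def k by (simp add: power2_eq_square algebra_simps)
  hence "card A1 = (k + 1) ^ 4 - 1 - k * (k * k + 2 * k + 2)" by simp
  also have "\<dots> = ((k + 1)^2 - (k + 1)) * ((k + 1)^2 + 1)"
    by (simp add: power2_eq_square eval_nat_numeral algebra_simps)
  finally show ?thesis unfolding k .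
qed

lemma weight_enum_D: "weight_enum n Dset = 1 + monom ((q^2 - q) * (q^2 + 1)) (q^2 - q)
                              + monom ((q - 1) * (q^2 + 1)) (q^2)"
proof (rule poly_eqI)
  fix k
  have ne: "q^2 - q \<noteq> 0" "q^2 \<noteq> 0" "q^2 \<noteq> q^2 - q" "q^2 - q \<noteq> q^2" "0 \<noteq> q^2" "0 \<noteq> q^2 - q"
    using qq_facts by linarith+
  have lt: "q^2 < n" "q^2 - q < n" using qq_facts n_pos by linarith+
  define F where "F = (\<lambda>k. if k = 0 then 1 else if k = q^2 then (q - 1) * (q^2 + 1) else
      if k = q^2 - q then (q^2 - q) * (q^2 + 1) else (0::nat))"
  have cnt: "card {c\<in>Dset. hamming_wt n c = k} = F k"
  proof -
    have cT: "card T0 = (q - 1) * (q^2 + 1)" using card_T0 by (simp only: n_def)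
    consider "k = 0" | "k = q^2" | "k = q^2 - q" | "k \<noteq> 0 \<and> k \<noteq> q^2 \<and> k \<noteq> q^2 - q" by blast
    thus ?thesis
    proof cases
      case 1 thus ?thesis unfolding card_class F_def wt_class using ne by simp
    next
      case 2 thus ?thesis unfolding card_class F_def wt_class using ne cT by simp
    next
      case 3 thus ?thesis unfolding card_class F_def wt_class using ne card_A1' by simp
    next
      case 4 thus ?thesis unfolding card_class F_def wt_class by simp
    qed
  qed
  have "coeff (weight_enum n Dset) k = (\<Sum>i\<le>n. if i = k then card {c\<in>Dset. hamming_wt n c = i} else 0)"
    unfolding weight_enum_def coeff_sum coeff_monom by (intro sum.cong refl)
  also have "\<dots> = (if k \<le> n then card {c\<in>Dset. hamming_wt n c = k} else 0)"
    by (simp add: sum.delta')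
  also have "\<dots> = F k"
  proof (cases "k \<le> n")
    case True thus ?thesis using cnt by simp
  next
    case False
    hence "k \<noteq> 0" "k \<noteq> q^2" "k \<noteq> q^2 - q" using lt by auto
    thus ?thesis using False by (simp add: F_def)
  qed
  also have "F k = coeff (1 + monom ((q^2 - q) * (q^2 + 1)) (q^2 - q)
                              + monom ((q - 1) * (q^2 + 1)) (q^2)) k"
  proof -
    consider "k = 0" | "k = q^2" | "k = q^2 - q" | "k \<noteq> 0 \<and> k \<noteq> q^2 \<and> k \<noteq> q^2 - q" by blast
    thus ?thesis
    proof cases
      case 1 thus ?thesis using ne by (simp add: F_def coeff_monom coeff_1)
    next
      case 2 thus ?thesis using ne by (simp add: F_def coeff_monom coeff_1)
    next
      case 3 thus ?thesis using ne by (simp add: F_def coeff_monom coeff_1)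
    next
      case 4 thus ?thesis using ne by (simp add: F_def coeff_monom coeff_1)
    qed
  qed
  finally show "coeff (weight_enum n Dset) k = coeff (1 + monom ((q^2 - q) * (q^2 + 1)) (q^2 - q)
                              + monom ((q - 1) * (q^2 + 1)) (q^2)) k" .
qed

lemma cw_zero: "cw 0 = (\<lambda>_. 0)" by (simp add: cw_def fun_eq_iff)

lemma T0_ne: "T0 \<noteq> {}"
proof -
  have "card T0 > 0" using card_T0 q_gt n_pos by simp
  thus ?thesis by auto
qed

lemma A1_ne: "A1 \<noteq> {}"
proof -
  have "card A1 > 0" using card_A1' qq_facts by simp
  thus ?thesis by auto
qed

lemma min_dist_D: "min_dist n Dset = q^2 - q"
proof -
  have "Dset - {(\<lambda>_. 0)} = cw ` (UNIV - {0})"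
    unfolding D_eq cw_zero[symmetric] using cw_inj by (auto dest: injD)
  hence "hamming_wt n ` (Dset - {(\<lambda>_. 0)}) = (\<lambda>a. hamming_wt n (cw a)) ` (UNIV - {0})" by auto
  also have "\<dots> = {q^2, q^2 - q}"
  proof
    show "(\<lambda>a. hamming_wt n (cw a)) ` (UNIV - {0}) \<subseteq> {q^2, q^2 - q}" by (auto simp: wt_cases)
    obtain a where "a \<in> T0" using T0_ne by auto
    hence "q^2 \<in> (\<lambda>a. hamming_wt n (cw a)) ` (UNIV - {0})" using zero_notin_T0
      by (intro image_eqI[of _ _ a]) (auto simp: wt_cases)
    moreover obtain b where "b \<in> A1" using A1_ne by auto
    hence "q^2 - q \<in> (\<lambda>a. hamming_wt n (cw a)) ` (UNIV - {0})"
      by (intro image_eqI[of _ _ b]) (auto simp: wt_cases A1_def)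
    ultimately show "{q^2, q^2 - q} \<subseteq> (\<lambda>a. hamming_wt n (cw a)) ` (UNIV - {0})" by auto
  qed
  finally show ?thesis unfolding min_dist_def using qq_facts by (simp add: min_def)
qed

end

context cc begin

definition VI :: "nat set \<Rightarrow> (nat \<Rightarrow> 'a) set" where
  "VI I = {y. (\<forall>i\<in>I. y i \<in> Fq) \<and> (\<forall>i. i \<notin> I \<longrightarrow> y i = 0)}"

lemma card_VI: "finite I \<Longrightarrow> card (VI I) = q ^ card I"
proof (induction I rule: finite_induct)
  case empty
  have "VI {} = {(\<lambda>_. 0)}" by (auto simp: VI_def)
  thus ?case by simp
next
  case (insert k I)
  have "bij_betw (\<lambda>y. (y k, y(k := 0))) (VI (insert k I)) (Fq \<times> VI I)"
  proof (rule bij_betwI[where g = "\<lambda>(t, z). z(k := t)"])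
    show "(\<lambda>y. (y k, y(k := 0))) \<in> VI (insert k I) \<rightarrow> Fq \<times> VI I"
      using insert.hyps by (auto simp: VI_def)
    show "(\<lambda>(t, z). z(k := t)) \<in> Fq \<times> VI I \<rightarrow> VI (insert k I)"
      by (auto simp: VI_def)
    show "\<And>x. x \<in> VI (insert k I) \<Longrightarrow> (case (x k, x(k := 0)) of (t, z) \<Rightarrow> z(k := t)) = x"
      by auto
    show "\<And>y. y \<in> Fq \<times> VI I \<Longrightarrow> ((case y of (t, z) \<Rightarrow> z(k := t)) k,
        (case y of (t, z) \<Rightarrow> z(k := t))(k := 0)) = y"
      using insert.hyps by (auto simp: VI_def fun_eq_iff)
  qed
  hence "card (VI (insert k I)) = card (Fq \<times> VI I)" by (rule bij_betw_same_card)
  also have "\<dots> = q * q ^ card I" using insert.IH by (simp add: card_cartesian_product card_Fq)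
  finally show ?case using insert.hyps by simp
qed

definition Phi :: "(nat \<Rightarrow> 'a) \<Rightarrow> 'a" where "Phi y = (\<Sum>i<n. y i * \<theta> ^ i)"

lemma Phi_add: "Phi (\<lambda>i. a i + b i) = Phi a + Phi b"
  by (simp add: Phi_def sum.distrib algebra_simps)
lemma Phi_diff: "Phi (\<lambda>i. a i - b i) = Phi a - Phi b"
  by (simp add: Phi_def sum_subtractf algebra_simps)

lemma VI_add: "a \<in> VI I \<Longrightarrow> b \<in> VI I \<Longrightarrow> (\<lambda>i. a i + b i) \<in> VI I"
  by (auto simp: VI_def intro: Fq_add)
lemma VI_diff: "a \<in> VI I \<Longrightarrow> b \<in> VI I \<Longrightarrow> (\<lambda>i. a i - b i) \<in> VI I"
  by (auto simp: VI_def intro: Fq_diff)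

lemma VI_mono: "I \<subseteq> J \<Longrightarrow> VI I \<subseteq> VI J"
  by (auto simp: VI_def)

lemma Tr_Phi: "y \<in> VI {..<n} \<Longrightarrow> Tr (a * Phi y) = (\<Sum>i<n. y i * Tr (a * \<theta> ^ i))"
proof -
  assume y: "y \<in> VI {..<n}"
  have "Tr (a * Phi y) = (\<Sum>i<n. Tr (y i * (a * \<theta> ^ i)))"
    by (simp add: Phi_def sum_distrib_left Tr_sum algebra_simps)
  also have "\<dots> = (\<Sum>i<n. y i * Tr (a * \<theta> ^ i))"
    using y by (intro sum.cong refl Tr_scal) (auto simp: VI_def)
  finally show ?thesis .
qed

definition dualset where "dualset = dual_code Fq n Dset"

lemma dual_eq: "dualset = {y \<in> VI {..<n}. Phi y = 0}"
proof (intro set_eqI iffI)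
  fix y assume "y \<in> dualset"
  hence yV: "y \<in> VI {..<n}" and orth: "\<And>c. c \<in> Dset \<Longrightarrow> (\<Sum>i<n. c i * y i) = 0"
    by (auto simp: dualset_def dual_code_def VI_def)
  have "\<And>a. Tr (a * Phi y) = 0"
  proof -
    fix a
    have "Tr (a * Phi y) = (\<Sum>i<n. cw a i * y i)"
      unfolding Tr_Phi[OF yV] by (intro sum.cong refl) (simp add: cw_def mult.commute)
    also have "\<dots> = 0" by (rule orth) (rule cw_in_D)
    finally show "Tr (a * Phi y) = 0" .
  qed
  hence "Phi y = 0" by (rule Tr_nondeg)
  thus "y \<in> {y \<in> VI {..<n}. Phi y = 0}" using yV by simp
next
  fix y assume "y \<in> {y \<in> VI {..<n}. Phi y = 0}"
  hence yV: "y \<in> VI {..<n}" and P: "Phi y = 0" by auto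
  have "\<And>c. c \<in> Dset \<Longrightarrow> (\<Sum>i<n. c i * y i) = 0"
  proof -
    fix c assume "c \<in> Dset"
    then obtain a where c: "c = cw a" unfolding D_eq by auto
    have "(\<Sum>i<n. c i * y i) = Tr (a * Phi y)"
      unfolding Tr_Phi[OF yV] c by (intro sum.cong refl) (simp add: cw_def mult.commute)
    thus "(\<Sum>i<n. c i * y i) = 0" using P by simp
  qed
  thus "y \<in> dualset" using yV by (auto simp: dualset_def dual_code_def VI_def)
qed

lemma theta_conj_inj: "inj_on (\<lambda>e. \<theta> ^ (q ^ e)) {..<4}"
proof (intro inj_onI)
  fix e f assume "e \<in> {..<4::nat}" "f \<in> {..<4::nat}" "\<theta> ^ (q ^ e) = \<theta> ^ (q ^ f)"
  thus "e = f" using conj_inj[of \<theta> e f] theta_deg4 by simp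
qed

lemma Phi_inj4: "inj_on Phi (VI {..<4})"
proof (intro inj_onI)
  fix y y' assume y: "y \<in> VI {..<4}" and y': "y' \<in> VI {..<4}" and eq: "Phi y = Phi y'"
  define d where "d = (\<lambda>i. y i - y' i)"
  have dV: "d \<in> VI {..<4}" unfolding d_def using y y' by (rule VI_diff)
  have dF: "\<forall>i<n. d i \<in> Fq" using dV by (auto simp: VI_def)
  have d0: "\<And>i. i \<ge> 4 \<Longrightarrow> d i = 0" using dV by (auto simp: VI_def)
  let ?P = "vec_poly n d"
  have "Phi d = Phi y - Phi y'" unfolding d_def by (rule Phi_diff)
  hence "Phi d = 0" using eq by simp
  hence "poly ?P \<theta> = 0" by (simp add: poly_vec Phi_def)
  hence roots: "\<And>e. poly ?P (\<theta> ^ (q ^ e)) = 0" using frob_eval[OF dF] q_gt by simp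
  have "?P = 0"
  proof (rule ccontr)
    assume P0: "?P \<noteq> 0"
    have "degree ?P \<le> 3" by (rule degree_le) (auto simp: coeff_vec d0)
    moreover have "(\<lambda>e. \<theta> ^ (q ^ e)) ` {..<4} \<subseteq> {x. poly ?P x = 0}" using roots by auto
    hence "card ((\<lambda>e. \<theta> ^ (q ^ e)) ` {..<4}) \<le> card {x. poly ?P x = 0}" by (intro card_mono) auto
    hence "4 \<le> card {x. poly ?P x = 0}" using card_image[OF theta_conj_inj] by simp
    ultimately show False using roots_bound[OF P0] by simp
  qed
  hence "\<forall>i<n. d i = 0" using coeff_vec[of n d] by (metis coeff_0)
  hence "\<forall>i. d i = 0" using d0 n_ge4 by (metis not_le order.trans)
  thus "y = y'" by (simp add: d_def fun_eq_iff)
qed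

lemma Phi_surj4: "Phi ` VI {..<4} = UNIV"
proof -
  have "card (Phi ` VI {..<4}) = q ^ 4" using card_image[OF Phi_inj4] card_VI[of "{..<4}"] by simp
  thus ?thesis using card_F by (metis card_eq_UNIV_imp_eq_UNIV finite_UNIV)
qed

definition psi :: "'a \<Rightarrow> nat \<Rightarrow> 'a" where "psi z = inv_into (VI {..<4}) Phi z"

lemma psi_props: "psi z \<in> VI {..<n}" "Phi (psi z) = z"
proof -
  have z: "z \<in> Phi ` VI {..<4}" using Phi_surj4 by simp
  have "psi z \<in> VI {..<4}" unfolding psi_def by (rule inv_into_into[OF z])
  thus "psi z \<in> VI {..<n}" using VI_mono[of "{..<4}" "{..<n}"] n_ge4 by auto
  show "Phi (psi z) = z" unfolding psi_def by (rule f_inv_into_f[OF z])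
qed

lemma card_dual: "card dualset = q ^ (q^2 - 3)"
proof -
  let ?K = "{y \<in> VI {..<n}. Phi y = 0}"
  have "bij_betw (\<lambda>y. (Phi y, \<lambda>i. y i - psi (Phi y) i)) (VI {..<n}) (UNIV \<times> ?K)"
  proof (rule bij_betwI[where g = "\<lambda>(z, k). (\<lambda>i. k i + psi z i)"])
    show "(\<lambda>y. (Phi y, \<lambda>i. y i - psi (Phi y) i)) \<in> VI {..<n} \<rightarrow> UNIV \<times> ?K"
      using psi_props by (auto intro: VI_diff simp: Phi_diff)
    show "(\<lambda>(z, k). (\<lambda>i. k i + psi z i)) \<in> UNIV \<times> ?K \<rightarrow> VI {..<n}"
      using psi_props by (auto intro: VI_add)
    show "\<And>x. x \<in> VI {..<n} \<Longrightarrow> (case (Phi x, \<lambda>i. x i - psi (Phi x) i) of (z, k) \<Rightarrow> (\<lambda>i. k i + psi z i)) = x"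
      by simp
    show "\<And>y. y \<in> UNIV \<times> ?K \<Longrightarrow> (Phi (case y of (z, k) \<Rightarrow> (\<lambda>i. k i + psi z i)),
       \<lambda>i. (case y of (z, k) \<Rightarrow> (\<lambda>i. k i + psi z i)) i - psi (Phi (case y of (z, k) \<Rightarrow> (\<lambda>i. k i + psi z i))) i) = y"
      using psi_props by (auto simp: Phi_add)
  qed
  hence "card (VI {..<n}) = card ((UNIV :: 'a set) \<times> ?K)" by (rule bij_betw_same_card)
  hence "q ^ n = q ^ 4 * card ?K" using card_VI[of "{..<n}"] card_F by (simp add: card_cartesian_product)
  moreover have "q ^ n = q ^ 4 * q ^ (q^2 - 3)"
  proof -
    have "n = 4 + (q^2 - 3)" using n_ge4 n_def by simp
    thus ?thesis by (simp add: power_add)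
  qed
  ultimately have "card ?K = q ^ (q^2 - 3)" using q_gt by simp
  thus ?thesis using dual_eq by simp
qed

end

context cc begin

lemma Nf_Fq: "t \<in> Fq \<Longrightarrow> Nf t \<in> Fq"
  by (simp add: Nf_def Fq_powq Fq_mult)

lemma Nf_lin: "\<alpha> \<in> Fq \<Longrightarrow> \<beta> \<in> Fq \<Longrightarrow>
  Nf (\<alpha> + \<beta> * w) = \<alpha> * \<alpha> + \<alpha> * \<beta> * (w + w ^ (q^2)) + \<beta> * \<beta> * Nf w"
proof -
  assume a: "\<alpha> \<in> Fq" and b: "\<beta> \<in> Fq"
  have "(\<alpha> + \<beta> * w) ^ (q^2) = \<alpha> + \<beta> * w ^ (q^2)"
    using Fq_powq[OF a, of 2] Fq_powq[OF b, of 2] by (simp add: frob_add power_mult_distrib)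
  thus ?thesis by (simp add: Nf_def algebra_simps)
qed

lemma no_col:
  assumes ij: "i < n" "j < n" "i \<noteq> j" and k: "k < n"
    and ab: "\<alpha> \<in> Fq" "\<beta> \<in> Fq" "\<alpha> \<noteq> 0" "\<beta> \<noteq> 0" and c: "\<gamma> \<in> Fq"
    and eq: "\<alpha> * \<theta> ^ i + \<beta> * \<theta> ^ j + \<gamma> * \<theta> ^ k = 0"
  shows False
proof -
  have xi: "\<theta> ^ i \<noteq> 0" using theta_nz by simp
  define w where "w = \<theta> ^ j / \<theta> ^ i"
  have "(\<alpha> * \<theta> ^ i + \<beta> * \<theta> ^ j + \<gamma> * \<theta> ^ k) / \<theta> ^ i = 0" using eq by simp
  hence "\<alpha> + \<beta> * w + \<gamma> * (\<theta> ^ k / \<theta> ^ i) = 0"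
    using xi theta_nz by (simp add: w_def add_divide_distrib)
  hence "\<alpha> + \<beta> * w = - (\<gamma> * (\<theta> ^ k / \<theta> ^ i))" by (rule eq_neg_iff_add_eq_0[THEN iffD2])
  hence e: "\<alpha> + \<beta> * w = (- \<gamma>) * (\<theta> ^ k / \<theta> ^ i)" by (simp only: minus_mult_left)
  have "Nf (\<alpha> + \<beta> * w) = Nf (- \<gamma>) * (Nf (\<theta> ^ k) / Nf (\<theta> ^ i))"
    unfolding e Nf_mult Nf_divide ..
  hence NF: "Nf (\<alpha> + \<beta> * w) \<in> Fq"
    using Nf_Fq[OF Fq_uminus[OF c]] Nf_theta by (simp add: Fq_mult Fq_divide)
  have Nw: "Nf w \<in> Fq" unfolding w_def Nf_divide by (intro Fq_divide Nf_theta)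
  have "\<alpha> * \<beta> * (w + w ^ (q^2)) = Nf (\<alpha> + \<beta> * w) - \<alpha> * \<alpha> - \<beta> * \<beta> * Nf w"
    using Nf_lin[OF ab(1,2), of w] by simp
  hence F1: "\<alpha> * \<beta> * (w + w ^ (q^2)) \<in> Fq" using NF Nw ab
    by (simp add: Fq_diff Fq_mult)
  have F2: "\<alpha> * \<beta> \<in> Fq" using ab by (simp add: Fq_mult)
  have nz: "\<alpha> * \<beta> \<noteq> 0" using ab by simp
  have "(\<alpha> * \<beta> * (w + w ^ (q^2))) / (\<alpha> * \<beta>) \<in> Fq" by (rule Fq_divide[OF F1 F2])
  moreover have "(\<alpha> * \<beta> * (w + w ^ (q^2))) / (\<alpha> * \<beta>) = w + w ^ (q^2)" using nz by simp
  ultimately have "w + w ^ (q^2) \<in> Fq" by simp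
  hence "w \<in> Fq" by (rule Qlem[OF Nw])
  hence "i = j" using theta_ratio[OF ij(1,2)] by (simp add: w_def)
  thus False using ij by simp
qed

lemma dual_wt_ge4:
  assumes y: "y \<in> dualset" and y0: "y \<noteq> (\<lambda>_. 0)"
  shows "4 \<le> hamming_wt n y"
proof (rule ccontr)
  assume "\<not> 4 \<le> hamming_wt n y"
  hence lt: "card {i\<in>{..<n}. y i \<noteq> 0} < 4" by (simp add: hamming_wt_def)
  let ?S = "{i\<in>{..<n}. y i \<noteq> 0}"
  have yV: "y \<in> VI {..<n}" and P: "Phi y = 0" using y by (auto simp: dual_eq)
  have yF: "\<And>i. y i \<in> Fq" using yV by (auto simp: VI_def)
  have "?S \<noteq> {}"
  proof
    assume "?S = {}"
    hence "\<forall>i. y i = 0" using yV by (auto simp: VI_def)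
    thus False using y0 by auto
  qed
  hence cS: "card ?S \<noteq> 0" by simp
  have PS: "(\<Sum>i\<in>?S. y i * \<theta> ^ i) = 0"
  proof -
    have "(\<Sum>i\<in>?S. y i * \<theta> ^ i) = (\<Sum>i<n. y i * \<theta> ^ i)"
      by (intro sum.mono_neutral_left) auto
    thus ?thesis using P by (simp add: Phi_def)
  qed
  consider "card ?S = 1" | "card ?S = 2" | "card ?S = 3" using lt cS by linarith
  thus False
  proof cases
    case 1
    then obtain i where S: "?S = {i}" by (auto simp: card_Suc_eq)
    hence "y i * \<theta> ^ i = 0" using PS by simp
    moreover have "y i \<noteq> 0" using S by auto
    ultimately show False using theta_nz by simp
  next
    case 2
    then obtain i j where S: "?S = {i, j}" "i \<noteq> j" by (auto simp: card_2_iff)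
    hence "y i * \<theta> ^ i + y j * \<theta> ^ j + 0 * \<theta> ^ 0 = 0" using PS by simp
    moreover have "i < n" "j < n" "y i \<noteq> 0" "y j \<noteq> 0" using S by auto
    ultimately show False using no_col[of i j 0 "y i" "y j" 0] yF n_pos S(2) by simp
  next
    case 3
    then obtain i j k where S: "?S = {i, j, k}" "i \<noteq> j" "j \<noteq> k" "i \<noteq> k" by (auto simp: card_3_iff)
    hence "y i * \<theta> ^ i + y j * \<theta> ^ j + y k * \<theta> ^ k = 0" using PS by (simp add: add.assoc)
    moreover have "i < n" "j < n" "k < n" "y i \<noteq> 0" "y j \<noteq> 0" using S by auto
    ultimately show False using no_col[of i j k "y i" "y j" "y k"] yF S by simp
  qed
qed

lemma dual_wt4_exists: "\<exists>d\<in>dualset. d \<noteq> (\<lambda>_. 0) \<and> hamming_wt n d \<le> 4"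
proof -
  obtain a where aA: "a \<in> A1" using A1_ne by auto
  have a0: "a \<noteq> 0" using aA by (simp add: A1_def)
  let ?Ia = "{i\<in>{..<n}. Tr (a * \<theta> ^ i) = 0}"
  have "card ?Ia = q + 1" using Z_A1[OF aA] by (simp add: Z_def)
  hence "4 \<le> card ?Ia" using q_gt by simp
  then obtain I where I: "I \<subseteq> ?Ia" "card I = 4" "finite I" by (rule obtain_subset_with_card_n)
  have In: "I \<subseteq> {..<n}" using I by auto
  let ?H = "{x. Tr (a * x) = 0}"
  have cH: "card ?H = q ^ 3"
  proof -
    have "?H = {x. Tr (x * a) = 0}" by (simp add: mult.commute)
    thus ?thesis using card_ker_w[OF a0] by simp
  qed
  have img: "Phi ` VI I \<subseteq> ?H"
  proof
    fix x assume "x \<in> Phi ` VI I"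
    then obtain y where y: "y \<in> VI I" "x = Phi y" by auto
    have yV: "y \<in> VI {..<n}" using y VI_mono[OF In] by auto
    have "Tr (a * Phi y) = (\<Sum>i<n. y i * Tr (a * \<theta> ^ i))" by (rule Tr_Phi[OF yV])
    also have "\<dots> = 0"
    proof (intro sum.neutral ballI)
      fix i assume "i \<in> {..<n}"
      show "y i * Tr (a * \<theta> ^ i) = 0"
      proof (cases "i \<in> I")
        case True thus ?thesis using I by auto
      next
        case False thus ?thesis using y by (simp add: VI_def)
      qed
    qed
    finally show "x \<in> ?H" using y by simp
  qed
  have "\<not> inj_on Phi (VI I)"
  proof
    assume "inj_on Phi (VI I)"
    hence "card (Phi ` VI I) = q ^ 4" using card_image card_VI[OF I(3)] I(2) by metis
    moreover have "card (Phi ` VI I) \<le> q ^ 3" using card_mono[OF _ img] cH by simp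
    moreover have "q ^ 3 < q ^ 4" using q_gt by (intro power_strict_increasing) auto
    ultimately show False by simp
  qed
  then obtain y y' where yy: "y \<in> VI I" "y' \<in> VI I" "y \<noteq> y'" "Phi y = Phi y'"
    by (auto simp: inj_on_def)
  define d where "d = (\<lambda>i. y i - y' i)"
  have dI: "d \<in> VI I" unfolding d_def using yy by (intro VI_diff)
  hence dV: "d \<in> VI {..<n}" using VI_mono[OF In] by auto
  have "Phi d = 0" unfolding d_def Phi_diff using yy by simp
  hence dD: "d \<in> dualset" using dV by (simp add: dual_eq)
  have d0: "d \<noteq> (\<lambda>_. 0)"
  proof
    assume "d = (\<lambda>_. 0)"
    hence "y = y'" by (simp add: d_def fun_eq_iff)
    thus False using yy by simp
  qed
  have "{i\<in>{..<n}. d i \<noteq> 0} \<subseteq> I" using dI by (auto simp: VI_def)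
  hence "hamming_wt n d \<le> card I" unfolding hamming_wt_def using I(3) by (rule card_mono[rotated])
  thus ?thesis using dD d0 I(2) by auto
qed

lemma min_dist_dual: "min_dist n dualset = 4"
proof -
  obtain d where d: "d \<in> dualset" "d \<noteq> (\<lambda>_. 0)" "hamming_wt n d \<le> 4" using dual_wt4_exists by blast
  have hd: "hamming_wt n d = 4" using dual_wt_ge4[OF d(1,2)] d(3) by simp
  have dm: "d \<in> dualset - {(\<lambda>_. 0)}" using d by simp
  have mem: "4 \<in> hamming_wt n ` (dualset - {(\<lambda>_. 0)})" by (rule image_eqI[where f = "hamming_wt n", OF hd[symmetric] dm])
  have sub: "dualset \<subseteq> VI {..<n}" by (auto simp: dual_eq)
  have "card (VI {..<n}) \<noteq> 0" using card_VI[of "{..<n}"] q_gt by simp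
  hence fV: "finite (VI {..<n})" by (meson card.infinite)
  have fD: "finite dualset" by (rule finite_subset[OF sub fV])
  have fin: "finite (hamming_wt n ` (dualset - {(\<lambda>_. 0)}))" using fD by simp
  show ?thesis unfolding min_dist_def
  proof (rule Min_eqI[OF fin _ mem])
    fix x assume "x \<in> hamming_wt n ` (dualset - {(\<lambda>_. 0)})"
    then obtain y where y: "y \<in> dualset" "y \<noteq> (\<lambda>_. 0)" "x = hamming_wt n y" by auto
    show "4 \<le> x" unfolding y(3) by (rule dual_wt_ge4[OF y(1,2)])
  qed
qed

end

context cc begin

lemma exp3: "q ^ 3 = (q^2 - q + 1) + r * n * s"
proof -
  obtain k where k: "q = k + 1" using q_gt by (metis add.commute less_imp_Suc_add plus_1_eq_Suc)
  have "r * n * s = (q - 1) * n" using s_props(1) by simp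
  also have "\<dots> = k * (k * k + 2 * k + 2)" unfolding n_def k by (simp add: power2_eq_square algebra_simps)
  finally have e: "r * n * s = k * (k * k + 2 * k + 2)" .
  show ?thesis unfolding e unfolding k by (simp add: power2_eq_square power3_eq_cube algebra_simps)
qed

lemma exp4: "q ^ 4 - q ^ 3 + q ^ 2 = q + r * n * (q * s)"
proof -
  obtain k where k: "q = k + 1" using q_gt by (metis add.commute less_imp_Suc_add plus_1_eq_Suc)
  have "r * n * (q * s) = q * ((q - 1) * n)" using s_props(1) by (simp add: algebra_simps)
  also have "\<dots> = (k + 1) * (k * (k * k + 2 * k + 2))" unfolding n_def k by (simp add: power2_eq_square algebra_simps)
  finally have e: "r * n * (q * s) = (k + 1) * (k * (k * k + 2 * k + 2))" .
  show ?thesis unfolding e unfolding k by (simp add: power2_eq_square power3_eq_cube eval_nat_numeral algebra_simps)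
qed

lemma hpol_explicit:
  "[:- \<delta>, 1:] * [:- (\<delta> ^ (q^2)), 1:] *
   ([:- (\<delta> ^ (q^2 - q + 1)), 1:] * [:- (\<delta> ^ (q^4 - q^3 + q^2)), 1:]) = hpol"
proof -
  have a: "\<delta> ^ (q^2 - q + 1) = \<delta> ^ (q^3)" unfolding exp3 by (rule delta_pow_add_mult[symmetric])
  have b: "\<delta> ^ (q^4 - q^3 + q^2) = \<delta> ^ q" unfolding exp4 by (rule delta_pow_add_mult)
  have "hpol = (\<Prod>e<4. [:- (\<delta> ^ (q ^ e)), 1:])"
    unfolding hpol_def Bset_def by (subst prod.reindex[OF inj_B]) simp
  also have "\<dots> = [:- \<delta>, 1:] * [:- (\<delta> ^ q), 1:] * [:- (\<delta> ^ (q^2)), 1:] * [:- (\<delta> ^ (q^3)), 1:]"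
    by (simp add: eval_nat_numeral)
  finally have h: "hpol = [:- \<delta>, 1:] * [:- (\<delta> ^ q), 1:] * [:- (\<delta> ^ (q^2)), 1:] * [:- (\<delta> ^ (q^3)), 1:]" .
  show ?thesis unfolding a b h by (simp only: ac_simps)
qed

end

theorem theorem4p3:
  fixes p m q n r :: nat and lam \<delta> :: "'a::{field,finite}"
    and g1 g2 :: "'a poly" and C D :: "(nat \<Rightarrow> 'a) set"
  assumes "prime p" and "m > 0" and "q = p ^ m" and "q > 2" and "n = q^2 + 1"
    and "card (UNIV :: 'a set) = q ^ 4"
    and "lam \<noteq> 0" and "lam \<in> Fsub (q^2)" and "mult_ord lam = r"
    and "r dvd (q - 1)" and "multiplicity 2 r = multiplicity 2 (q - 1)"
    and "mult_ord \<delta> = r * n" and "\<delta> ^ n = lam"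
    and "g1 = [:- \<delta>, 1:] * [:- (\<delta> ^ (q^2)), 1:]"
    and "g2 = [:- (\<delta> ^ (q^2 - q + 1)), 1:] * [:- (\<delta> ^ (q^4 - q^3 + q^2)), 1:]"
    and "C = constacyclic_code_chk (Fsub (q^2)) n lam (g1 * g2)"
    and "D = subfield_subcode n C (Fsub q)"
  shows "card D = q ^ 4 \<and> min_dist n D = q^2 - q \<and>
         weight_enum n D = 1 + monom ((q^2 - q) * (q^2 + 1)) (q^2 - q)
                              + monom ((q - 1) * (q^2 + 1)) (q^2) \<and>
         card (dual_code (Fsub q) n D) = q ^ (q^2 - 3) \<and>
         min_dist n (dual_code (Fsub q) n D) = 4"
proof -
  interpret cc p m q n r lam \<delta>
    using assms by unfold_locales auto
  have g: "g1 * g2 = hpol" using assms(14,15) hpol_explicit by simp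
  have CC: "C = Cset" using assms(16) g by (simp add: Cset_def)
  have DD: "D = Dset" using assms(17) CC by (simp add: Dset_def)
  have dd: "dual_code (Fsub q) n D = dualset" using DD by (simp add: dualset_def)
  show ?thesis unfolding dd using DD card_D min_dist_D weight_enum_D card_dual min_dist_dual by simp
qed


end
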